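(* Let $A\in\mathbb{R}^{m\times n}$ with $m\ge n$ have singular value decomposition $A=U\Sigma V^T$ with singular values $\sigma_1\ge\cdots\ge\sigma_k>\theta>\sigma_{k+1}\ge\cdots\ge\sigma_n$ for a threshold $\theta>0$. Let $b\le k$, $q\ge0$ be integers, $\Omega_1$ an $n\times b$ standard Gaussian matrix, $\widehat Q_1\in\mathbb{R}^{m\times b}$ a matrix with orthonormal columns spanning the range of $(AA^T)^qA\Omega_1$, $\widehat U_1$ a $b\times b$ orthogonal matrix of eigenvectors of $\widehat Q_1^TAA^T\widehat Q_1$ (decreasing eigenvalue order), and $Q_1=\widehat Q_1\widehat U_1$. Let $\epsilon=\mathbf{d}(\mathcal{R}(Q_1),\mathcal{R}_\theta(A))$ and suppose \[\epsilon<1\quad\text{and}\quad \sigma_k-\epsilon\|A\|_2>\theta>\sigma_{k+1}+\epsilon\|A\|_2 .\] Let $B=(I_m-Q_1Q_1^T)A$. Then $B$ maintains the singular values of $A$ below $\theta$ with absolute error not exceeding $\epsilon\|A\|_2$, in the sense that $|\sigma_{k-b+i}(B)-\sigma_{k+i}|\le\epsilon\|A\|_2$ for $i=1,\dots,n-k$; and \[\mathrm{rank}_\theta(B)=\mathrm{rank}_\theta(A)-b .\]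
   Context: $\sigma_j(M)$ is the $j$-th largest singular value of $M$. The numerical range $\mathcal{R}_\theta(A)$ is the span of the first $k$ left singular vectors $u_1,\dots,u_k$ of $A$ (those with singular values $>\theta$), and $\mathrm{rank}_\theta(M)$ (numerical rank) is the number of singular values of $M$ exceeding $\theta$. For matrices $W,Z$ with orthonormal columns, $\mathbf{d}(\mathcal{R}(W),\mathcal{R}(Z))=\|(I-ZZ^T)WW^T\|_2$; for a subspace, use an orthonormal basis for $Z$. *)

theory Defs
  imports "Jordan_Normal_Form.Char_Poly" "HOL-Library.Multiset"
begin

definition sing_vals :: "real mat \<Rightarrow> real list" where
  "sing_vals M = map sqrt (rev (sorted_list_of_multiset (proots (char_poly (transpose_mat M * M)))))"

text \<open>sigma_j(M): the j-th largest singular value (1-indexed).\<close>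
definition sval :: "nat \<Rightarrow> real mat \<Rightarrow> real" where
  "sval j M = sing_vals M ! (j - 1)"

definition rank_theta :: "real \<Rightarrow> real mat \<Rightarrow> nat" where
  "rank_theta \<theta> M = length (filter (\<lambda>s. s > \<theta>) (sing_vals M))"

definition vnorm :: "real vec \<Rightarrow> real" where
  "vnorm v = sqrt (v \<bullet> v)"

definition norm2 :: "real mat \<Rightarrow> real" where
  "norm2 M = Sup {vnorm (M *\<^sub>v x) | x. x \<in> carrier_vec (dim_col M) \<and> vnorm x = 1}"

definition colspace :: "real mat \<Rightarrow> real vec set" where
  "colspace M = {M *\<^sub>v x | x. x \<in> carrier_vec (dim_col M)}"

text \<open>Distance between ranges of matrices W, Z with orthonormal columns:
  d(R(W),R(Z)) = || (I - Z Z^T) W W^T ||_2.\<close>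
definition subspace_dist :: "real mat \<Rightarrow> real mat \<Rightarrow> real" where
  "subspace_dist W Z =
     norm2 ((1\<^sub>m (dim_row W) - Z * transpose_mat Z) * (W * transpose_mat W))"

definition first_cols :: "nat \<Rightarrow> real mat \<Rightarrow> real mat" where
  "first_cols k U = mat (dim_row U) k (\<lambda>(i,j). U $$ (i,j))"

end

theory Submission
  imports Defs "Jordan_Normal_Form.Schur_Decomposition"
begin


lemma sprod_self_ge0: "(v::real vec) \<bullet> v \<ge> 0"
  unfolding scalar_prod_def by (intro sum_nonneg) auto

lemma sprod_self_eq0: "(v::real vec) \<bullet> v = 0 \<Longrightarrow> v = 0\<^sub>v (dim_vec v)"
proof -
  assume a: "v \<bullet> v = 0"
  have "\<forall>i\<in>{0..<dim_vec v}. v $ i * v $ i = 0"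
    using a unfolding scalar_prod_def by (subst sum_nonneg_eq_0_iff[symmetric]) auto
  then show ?thesis by (intro eq_vecI) auto
qed

lemma vnorm_sq: "(vnorm v)^2 = v \<bullet> v"
  unfolding vnorm_def using sprod_self_ge0 by simp

lemma vnorm_ge0: "vnorm v \<ge> 0" unfolding vnorm_def using sprod_self_ge0 by simp

lemma vnorm_smult: "vnorm (a \<cdot>\<^sub>v v) = \<bar>a\<bar> * vnorm v"
proof -
  have "(a \<cdot>\<^sub>v v) \<bullet> (a \<cdot>\<^sub>v v) = a^2 * (v \<bullet> v)"
    unfolding scalar_prod_def by (simp add: sum_distrib_left power2_eq_square algebra_simps)
  then show ?thesis unfolding vnorm_def by (simp add: real_sqrt_mult)
qed

lemma sum_CS: fixes f g :: "'a \<Rightarrow> real"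
  shows "(\<Sum>i\<in>A. f i * g i)^2 \<le> (\<Sum>i\<in>A. f i ^2) * (\<Sum>i\<in>A. g i ^2)"
proof -
  define a where "a = (\<Sum>i\<in>A. f i ^2)"
  define b where "b = (\<Sum>i\<in>A. f i * g i)"
  define c where "c = (\<Sum>i\<in>A. g i ^2)"
  have c0: "c \<ge> 0" unfolding c_def by (intro sum_nonneg) auto
  have "0 \<le> (\<Sum>i\<in>A. (c * f i - b * g i)^2)" by (intro sum_nonneg) auto
  also have "\<dots> = (\<Sum>i\<in>A. c^2 * f i^2 - 2*c*b*(f i*g i) + b^2 * g i^2)"
    by (intro sum.cong refl) (simp add: power2_eq_square algebra_simps)
  also have "\<dots> = c^2 * (\<Sum>i\<in>A. f i^2) - 2*c*b*(\<Sum>i\<in>A. f i*g i) + b^2 * (\<Sum>i\<in>A. g i^2)"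
    by (simp add: sum.distrib sum_subtractf sum_distrib_left)
  also have "\<dots> = c^2 * a - 2 * c * b * b + b^2 * c"
    unfolding a_def[symmetric] b_def[symmetric] c_def[symmetric] ..
  also have "\<dots> = c * (c * a - b^2)" by (simp add: power2_eq_square algebra_simps)
  finally have h: "0 \<le> c * (c * a - b^2)" .
  show ?thesis
  proof (cases "c = 0")
    case True
    have "\<forall>i\<in>A. g i ^2 = 0" if "finite A"
      using True that unfolding c_def by (subst sum_nonneg_eq_0_iff[symmetric]) auto
    then have "b = 0" unfolding b_def by (cases "finite A") auto
    then show ?thesis using True unfolding a_def b_def c_def by simp
  next
    case False
    then have "c > 0" using c0 by simp
    then have "0 \<le> c * a - b^2" using h by (simp add: zero_le_mult_iff)
    then show ?thesis unfolding a_def b_def c_def by (simp add: algebra_simps)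
  qed
qed

lemma vec_CS: assumes "v \<in> carrier_vec n" "w \<in> carrier_vec n"
  shows "(v \<bullet> w)^2 \<le> (v \<bullet> v) * ((w::real vec) \<bullet> w)"
  using sum_CS[of "\<lambda>i. v $ i" "\<lambda>i. w $ i" "{0..<n}"] assms
  unfolding scalar_prod_def by (simp add: power2_eq_square)

lemma vec_CS_abs: assumes "v \<in> carrier_vec n" "w \<in> carrier_vec n"
  shows "\<bar>v \<bullet> w\<bar> \<le> vnorm v * vnorm (w::real vec)"
proof -
  have "\<bar>v \<bullet> w\<bar>^2 \<le> (vnorm v * vnorm w)^2"
    using vec_CS[OF assms] by (simp add: power_mult_distrib vnorm_sq)
  then show ?thesis using vnorm_ge0 by (meson abs_ge_zero mult_nonneg_nonneg power2_le_imp_le)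
qed

lemma sprod_transpose: assumes "X \<in> carrier_mat r c" "x \<in> carrier_vec c" "y \<in> carrier_vec r"
  shows "y \<bullet> (X *\<^sub>v x) = (transpose_mat X *\<^sub>v y) \<bullet> (x :: real vec)"
  using transpose_vec_mult_scalar[OF assms] by simp

lemma quad_form: assumes "X \<in> carrier_mat r c" "x \<in> carrier_vec c"
  shows "(X *\<^sub>v x) \<bullet> (X *\<^sub>v x) = x \<bullet> ((transpose_mat X * X) *\<^sub>v (x::real vec))"
proof -
  have "(X *\<^sub>v x) \<bullet> (X *\<^sub>v x) = (transpose_mat X *\<^sub>v (X *\<^sub>v x)) \<bullet> x"
    using sprod_transpose[OF assms, of "X *\<^sub>v x"] assms by simp
  also have "\<dots> = x \<bullet> (transpose_mat X *\<^sub>v (X *\<^sub>v x))"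
    by (rule comm_scalar_prod[of _ c]) (use assms in auto)
  also have "\<dots> = x \<bullet> ((transpose_mat X * X) *\<^sub>v x)"
    using assms by (subst assoc_mult_mat_vec) auto
  finally show ?thesis .
qed

lemma orth_sprod: assumes "X \<in> carrier_mat r c" "transpose_mat X * X = 1\<^sub>m c" "x \<in> carrier_vec c"
  shows "(X *\<^sub>v x) \<bullet> (X *\<^sub>v x) = x \<bullet> (x::real vec)"
  using quad_form[OF assms(1,3)] assms by simp

lemma orth_vnorm: assumes "X \<in> carrier_mat r c" "transpose_mat X * X = 1\<^sub>m c" "x \<in> carrier_vec c"
  shows "vnorm (X *\<^sub>v x) = vnorm (x::real vec)"
  using orth_sprod[OF assms] unfolding vnorm_def by simp

lemma orth_square_right: assumes "X \<in> carrier_mat n n" "transpose_mat X * X = 1\<^sub>m n"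
  shows "X * transpose_mat X = (1\<^sub>m n :: real mat)"
  using mat_mult_left_right_inverse[of "transpose_mat X" n X] assms by auto

lemma mat_vec_bound: assumes M: "M \<in> carrier_mat r c" and u: "u \<in> carrier_vec c"
  shows "vnorm (M *\<^sub>v u) \<le> sqrt (\<Sum>i<r. row M i \<bullet> row M i) * vnorm (u :: real vec)"
proof -
  have "(M *\<^sub>v u) \<bullet> (M *\<^sub>v u) = (\<Sum>i<r. (row M i \<bullet> u)^2)"
    using M unfolding scalar_prod_def[of "M *\<^sub>v u"] by (auto simp: power2_eq_square lessThan_atLeast0)
  also have "\<dots> \<le> (\<Sum>i<r. (row M i \<bullet> row M i) * (u \<bullet> u))"
    by (intro sum_mono vec_CS[of _ c]) (use M u in auto)
  also have "\<dots> = (\<Sum>i<r. row M i \<bullet> row M i) * (u \<bullet> u)" by (simp add: sum_distrib_right)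
  finally have "(vnorm (M *\<^sub>v u))^2 \<le> (sqrt (\<Sum>i<r. row M i \<bullet> row M i) * vnorm u)^2"
    by (simp add: vnorm_sq power_mult_distrib sum_nonneg sprod_self_ge0)
  then show ?thesis
    by (meson power2_le_imp_le mult_nonneg_nonneg real_sqrt_ge_zero sum_nonneg sprod_self_ge0 vnorm_ge0)
qed

lemma norm2_bdd: assumes M: "M \<in> carrier_mat r c"
  shows "bdd_above {vnorm (M *\<^sub>v x) | x. x \<in> carrier_vec (dim_col M) \<and> vnorm x = 1}"
  unfolding bdd_above_def
proof (rule exI[of _ "sqrt (\<Sum>i<r. row M i \<bullet> row M i)"], safe)
  fix x :: "real vec" assume "x \<in> carrier_vec (dim_col M)" "vnorm x = 1"
  then show "vnorm (M *\<^sub>v x) \<le> sqrt (\<Sum>i<r. row M i \<bullet> row M i)"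
    using mat_vec_bound[OF M, of x] M by auto
qed

lemma norm2_bound: assumes M: "M \<in> carrier_mat r c" and x: "x \<in> carrier_vec c"
  shows "vnorm (M *\<^sub>v x) \<le> norm2 M * vnorm (x::real vec)"
proof (cases "vnorm x = 0")
  case True
  then have "x \<bullet> x = 0" using vnorm_sq[of x] by simp
  then have "x = 0\<^sub>v c" using sprod_self_eq0[of x] x by auto
  then have "M *\<^sub>v x = 0\<^sub>v r" using M by (intro eq_vecI) (auto simp: scalar_prod_def)
  then show ?thesis using M True by (simp add: vnorm_def)
next
  case False
  then have xp: "vnorm x > 0" using vnorm_ge0[of x] by simp
  define u where "u = (1 / vnorm x) \<cdot>\<^sub>v x"
  have u: "u \<in> carrier_vec c" "vnorm u = 1" using x xp unfolding u_def by (auto simp: vnorm_smult)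
  have "vnorm (M *\<^sub>v u) \<le> norm2 M"
    unfolding norm2_def by (rule cSup_upper) (use u M norm2_bdd[OF M] in auto)
  moreover have "M *\<^sub>v u = (1 / vnorm x) \<cdot>\<^sub>v (M *\<^sub>v x)" unfolding u_def using M x by auto
  ultimately have "(1 / vnorm x) * vnorm (M *\<^sub>v x) \<le> norm2 M" using xp by (simp add: vnorm_smult)
  then show ?thesis using xp by (simp add: field_simps)
qed

lemma norm2_ge0: assumes M: "M \<in> carrier_mat r c" and c: "c > 0"
  shows "norm2 (M::real mat) \<ge> 0"
proof -
  have u: "unit_vec c 0 \<in> carrier_vec c" "vnorm (unit_vec c 0 :: real vec) = 1"
    using c by (auto simp: vnorm_def)
  have "vnorm (M *\<^sub>v unit_vec c 0) \<le> norm2 M"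
    unfolding norm2_def by (rule cSup_upper) (use u M norm2_bdd[OF M] in auto)
  then show ?thesis using vnorm_ge0 order.trans by blast
qed



lemma poly_of_real_map: "poly (map_poly of_real p) (of_real x) = (of_real (poly p x) :: complex)"
  by (induction p) (auto simp: map_poly_pCons)

lemma real_root_sym:
  fixes M :: "real mat"
  assumes M: "M \<in> carrier_mat n n" and sym: "transpose_mat M = M" and n: "n > 0"
  shows "\<exists>e. poly (char_poly M) e = 0"
proof -
  define Mc where "Mc = map_mat complex_of_real M"
  have Mc: "Mc \<in> carrier_mat n n" using M unfolding Mc_def by auto
  have cp: "char_poly Mc = map_poly of_real (char_poly M)"
    unfolding Mc_def by (rule of_real_hom.char_poly_hom[OF M])
  have "degree (char_poly Mc) = n" using degree_monic_char_poly[OF Mc] by simp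
  then have "\<not> constant (poly (char_poly Mc))" using n by (simp add: constant_degree)
  then obtain l where l: "poly (char_poly Mc) l = 0" using fundamental_theorem_of_algebra by blast
  then have "eigenvalue Mc l" using eigenvalue_root_char_poly[OF Mc] by simp
  then obtain v where v: "v \<in> carrier_vec n" "v \<noteq> 0\<^sub>v n" "Mc *\<^sub>v v = l \<cdot>\<^sub>v v"
    unfolding eigenvalue_def eigenvector_def using Mc by auto
  define s where "s = (\<Sum>i<n. \<Sum>j<n. cnj (v $ i) * of_real (M $$ (i,j)) * v $ j)"
  define c where "c = (\<Sum>i<n. cnj (v $ i) * v $ i)"
  have row: "(\<Sum>j<n. of_real (M $$ (i,j)) * v $ j) = l * v $ i" if i: "i < n" for i
  proof -
    have "(Mc *\<^sub>v v) $ i = l * v $ i" using v i by simp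
    moreover have "(Mc *\<^sub>v v) $ i = (\<Sum>j<n. of_real (M $$ (i,j)) * v $ j)"
      using i Mc M v(1) unfolding Mc_def by (auto simp: scalar_prod_def lessThan_atLeast0)
    ultimately show ?thesis by simp
  qed
  have s1: "s = l * c"
  proof -
    have "s = (\<Sum>i<n. cnj (v $ i) * (\<Sum>j<n. of_real (M $$ (i,j)) * v $ j))"
      unfolding s_def by (simp add: sum_distrib_left mult.assoc)
    also have "\<dots> = (\<Sum>i<n. cnj (v $ i) * (l * v $ i))" using row by simp
    also have "\<dots> = l * c" unfolding c_def by (simp add: sum_distrib_left algebra_simps)
    finally show ?thesis .
  qed
  have symM: "M $$ (j,i) = M $$ (i,j)" if "i < n" "j < n" for i j
    using arg_cong[OF sym, of "\<lambda>A. A $$ (i,j)"] that M by auto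
  have s2: "cnj s = s"
  proof -
    have "cnj s = (\<Sum>i<n. \<Sum>j<n. v $ i * of_real (M $$ (i,j)) * cnj (v $ j))"
      unfolding s_def by (simp add: cnj_sum)
    also have "\<dots> = (\<Sum>j<n. \<Sum>i<n. v $ i * of_real (M $$ (i,j)) * cnj (v $ j))"
      by (rule sum.swap)
    also have "\<dots> = s" unfolding s_def
      by (intro sum.cong refl) (simp add: symM algebra_simps)
    finally show ?thesis .
  qed
  have creal: "c = of_real (\<Sum>i<n. (cmod (v $ i))^2)"
    unfolding c_def by (simp add: complex_mult_cnj cmod_def mult.commute)
  have cpos: "(\<Sum>i<n. (cmod (v $ i))^2) > 0"
  proof (rule ccontr)
    assume "\<not> ?thesis"
    then have "(\<Sum>i<n. (cmod (v $ i))^2) = 0" by (metis sum_nonneg zero_le_power2 order.antisym not_less)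
    then have "\<forall>i\<in>{..<n}. (cmod (v $ i))^2 = 0" by (subst sum_nonneg_eq_0_iff[symmetric]) auto
    then have "v = 0\<^sub>v n" using v(1) by (intro eq_vecI) auto
    then show False using v(2) by simp
  qed
  have "cnj l * c = l * c" using s1 s2 creal by simp
  moreover have "c \<noteq> 0" using cpos unfolding creal by (metis of_real_eq_0_iff less_irrefl)
  ultimately have "cnj l = l" by simp
  then have "Im l = 0" by (metis cnj.sel(2) neg_equal_zero)
  then have lr: "l = of_real (Re l)" by (simp add: complex_eqI)
  have "of_real (poly (char_poly M) (Re l)) = (0::complex)"
    using l lr cp poly_of_real_map by metis
  then show ?thesis by auto
qed



lemma orth_completion:
  fixes u :: "real vec"
  assumes u: "u \<in> carrier_vec n" and u1: "u \<bullet> u = 1"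
  shows "\<exists>W. W \<in> carrier_mat n n \<and> transpose_mat W * W = 1\<^sub>m n \<and> col W 0 = u"
proof -
  have n: "n > 0" using u u1 by (cases n) (auto simp: scalar_prod_def)
  have u0: "u \<noteq> 0\<^sub>v n" using u1 by auto
  interpret cof_vec_space n "TYPE(real)" .
  define bs where "bs = basis_completion u"
  note bc = basis_completion[OF u u0, folded bs_def]
  define ws where "ws = gram_schmidt n bs"
  note gs = gram_schmidt_result[OF bc(2) bc(4) bc(5) ws_def]
  obtain rest where bs_eq: "bs = u # rest" using bc(6,7) n by (cases bs) auto
  have hdws: "hd ws = u" unfolding ws_def bs_eq using u by simp
  have lenws: "length ws = n" using gs(4) bc(6) by simp
  have wsc: "ws ! i \<in> carrier_vec n" if "i < n" for i using gs(3) lenws that by auto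
  have orth: "(ws ! i \<bullet> ws ! j = 0) = (i \<noteq> j)" if "i < n" "j < n" for i j
    using gs(2) that lenws unfolding corthogonal_def by (auto simp: scalar_prod_def)
  define W where "W = mat_of_cols n (map (\<lambda>w. (1 / vnorm w) \<cdot>\<^sub>v w) ws)"
  have W: "W \<in> carrier_mat n n" unfolding W_def using lenws by auto
  have colW: "col W i = (1 / vnorm (ws ! i)) \<cdot>\<^sub>v ws ! i" if "i < n" for i
    unfolding W_def using that lenws wsc by (subst col_mat_of_cols) auto
  have "transpose_mat W * W = 1\<^sub>m n"
  proof (rule eq_matI)
    fix i j assume ij: "i < dim_row (1\<^sub>m n)" "j < dim_col (1\<^sub>m n)"
    then have i: "i < n" and j: "j < n" by auto
    have "(transpose_mat W * W) $$ (i,j) = col W i \<bullet> col W j" using W i j by simp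
    also have "\<dots> = (1 / vnorm (ws ! i)) * (1 / vnorm (ws ! j)) * (ws ! i \<bullet> ws ! j)"
      using colW[OF i] colW[OF j] wsc[OF i] wsc[OF j] by simp
    also have "\<dots> = 1\<^sub>m n $$ (i,j)"
    proof (cases "i = j")
      case True
      have nz: "ws ! i \<bullet> ws ! i \<noteq> 0" using orth[OF i i] by simp
      then have "vnorm (ws ! i) \<noteq> 0" using vnorm_sq[of "ws ! i"] by auto
      then show ?thesis using True i vnorm_sq[of "ws ! i"] nz by (simp add: power2_eq_square)
    next
      case False
      then show ?thesis using orth[OF i j] i j by simp
    qed
    finally show "(transpose_mat W * W) $$ (i,j) = 1\<^sub>m n $$ (i,j)" .
  qed (use W in auto)
  moreover have "col W 0 = u"
  proof -
    have "ws ! 0 = u" using hdws lenws n by (metis hd_conv_nth list.size(3) not_less0)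
    moreover have "vnorm u = 1" using u1 unfolding vnorm_def by simp
    ultimately show ?thesis using colW[OF n] by simp
  qed
  ultimately show ?thesis using W by blast
qed



definition diagm :: "nat \<Rightarrow> (nat \<Rightarrow> real) \<Rightarrow> real mat" where
  "diagm n d = mat n n (\<lambda>(i,j). if i = j then d i else 0)"

lemma diagm_carrier[simp]: "diagm n d \<in> carrier_mat n n" unfolding diagm_def by auto
lemma diagm_dims[simp]: "dim_row (diagm n d) = n" "dim_col (diagm n d) = n" unfolding diagm_def by auto

lemma transpose_sym_entry: assumes "M \<in> carrier_mat n n" "transpose_mat M = M" "i < n" "j < n"
  shows "M $$ (j,i) = M $$ (i,j)"
proof -
  have "M $$ (j,i) = transpose_mat M $$ (i,j)" using assms(1,3,4) by simp
  also have "\<dots> = M $$ (i,j)" using assms(2) by simp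
  finally show ?thesis .
qed

lemma mult5: assumes A: "A \<in> carrier_mat n n" and B: "B \<in> carrier_mat n n" and C: "C \<in> carrier_mat n n" and D: "D \<in> carrier_mat n n" and E: "E \<in> carrier_mat n n"
  shows "A * B * C * (D * (E::'a::semiring_1 mat)) = A * (B * C * D) * E"
proof -
  have abc: "A * B * C \<in> carrier_mat n n" and bc: "B * C \<in> carrier_mat n n" using A B C by auto
  have 1: "A * B * C * (D * E) = (A * B * C * D) * E" by (rule assoc_mult_mat[OF abc D E, symmetric])
  have 2: "A * B * C = A * (B * C)" by (rule assoc_mult_mat[OF A B C])
  have 3: "A * (B * C) * D = A * (B * C * D)" by (rule assoc_mult_mat[OF A bc D])
  show ?thesis by (subst 1, subst 2, subst 3, rule refl)
qed

theorem spectral: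
  fixes M :: "real mat"
  assumes "M \<in> carrier_mat n n" "transpose_mat M = M"
  shows "\<exists>W d. W \<in> carrier_mat n n \<and> transpose_mat W * W = 1\<^sub>m n \<and>
     M = W * diagm n d * transpose_mat W \<and> (\<forall>i j. i \<le> j \<longrightarrow> j < n \<longrightarrow> d j \<le> d i) \<and>
     (\<forall>i<n. poly (char_poly M) (d i) = 0)"
  using assms
proof (induction n arbitrary: M)
  case 0
  show ?case
    by (rule exI[of _ "1\<^sub>m 0"], rule exI[of _ "\<lambda>_. 0"]) (use 0 in \<open>auto intro!: eq_matI\<close>)
next
  case (Suc n')
  define n where "n = Suc n'"
  have M: "M \<in> carrier_mat n n" and sym: "transpose_mat M = M" using Suc.prems n_def by auto
  define R where "R = {x. poly (char_poly M) x = 0}"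
  have cp0: "char_poly M \<noteq> 0" using degree_monic_char_poly[OF M] by auto
  have Rfin: "finite R" unfolding R_def using poly_roots_finite[OF cp0] .
  obtain e0 where "poly (char_poly M) e0 = 0" using real_root_sym[OF M sym] n_def by auto
  then have Rne: "R \<noteq> {}" unfolding R_def by auto
  define e where "e = Max R"
  have eR: "poly (char_poly M) e = 0" using Max_in[OF Rfin Rne] unfolding e_def R_def by auto
  have emax: "x \<le> e" if "poly (char_poly M) x = 0" for x
    using Max_ge[OF Rfin] that unfolding e_def R_def by auto
  have "eigenvalue M e" using eigenvalue_root_char_poly[OF M] eR by simp
  then obtain v where v: "v \<in> carrier_vec n" "v \<noteq> 0\<^sub>v n" "M *\<^sub>v v = e \<cdot>\<^sub>v v"
    unfolding eigenvalue_def eigenvector_def using M by auto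
  have vn: "vnorm v > 0"
  proof -
    have "v \<bullet> v \<noteq> 0" using sprod_self_eq0[of v] v by auto
    then show ?thesis using vnorm_ge0[of v] vnorm_sq[of v] by (cases "vnorm v = 0") auto
  qed
  define u where "u = (1 / vnorm v) \<cdot>\<^sub>v v"
  have u: "u \<in> carrier_vec n" using v unfolding u_def by auto
  have u1: "u \<bullet> u = 1"
  proof -
    have "vnorm u = 1" unfolding u_def using vn by (simp add: vnorm_smult)
    then show ?thesis using vnorm_sq[of u] by simp
  qed
  have Mu: "M *\<^sub>v u = e \<cdot>\<^sub>v u"
  proof -
    have "M *\<^sub>v u = (1 / vnorm v) \<cdot>\<^sub>v (M *\<^sub>v v)" unfolding u_def using M v by (simp add: mult_mat_vec)
    also have "\<dots> = e \<cdot>\<^sub>v u" unfolding v(3) u_def by (intro eq_vecI) auto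
    finally show ?thesis .
  qed
  obtain W0 where W0: "W0 \<in> carrier_mat n n" "transpose_mat W0 * W0 = 1\<^sub>m n" "col W0 0 = u"
    using orth_completion[OF u u1] by blast
  have W0': "W0 * transpose_mat W0 = 1\<^sub>m n" using orth_square_right[OF W0(1,2)] .
  define M1 where "M1 = transpose_mat W0 * M * W0"
  have M1: "M1 \<in> carrier_mat n n" unfolding M1_def using W0 M by auto
  have M1sym: "transpose_mat M1 = M1"
    unfolding M1_def using W0 M sym
    by (simp add: transpose_mult[of _ n n _ n] assoc_mult_mat[of _ n n _ n _ n])
  have M1col: "M1 $$ (i,0) = (if i = 0 then e else 0)" if i: "i < n" for i
  proof -
    have n0: "0 < n" using n_def by simp
    have "M1 $$ (i,0) = (transpose_mat W0 * (M * W0)) $$ (i,0)"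
      unfolding M1_def using W0 M by (simp add: assoc_mult_mat[of _ n n _ n _ n])
    also have "\<dots> = col W0 i \<bullet> (M *\<^sub>v col W0 0)" using W0 M i n0 by (simp add: mult_mat_vec_def)
    also have "\<dots> = e * (col W0 i \<bullet> u)" using W0 Mu u i by simp
    also have "col W0 i \<bullet> u = (transpose_mat W0 * W0) $$ (i,0)" using W0(1,3) i n0 by simp
    also have "\<dots> = (if i = 0 then 1 else 0)" using W0(2) i n0 by simp
    finally show ?thesis by simp
  qed
  have M1row: "M1 $$ (0,j) = (if j = 0 then e else 0)" if j: "j < n" for j
    using M1col[OF j] transpose_sym_entry[OF M1 M1sym, of j 0] j n_def by simp
  define M' where "M' = mat n' n' (\<lambda>(i,j). M1 $$ (Suc i, Suc j))"
  have M': "M' \<in> carrier_mat n' n'" unfolding M'_def by auto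
  have M'sym: "transpose_mat M' = M'"
    unfolding M'_def using transpose_sym_entry[OF M1 M1sym] n_def by (intro eq_matI) auto
  obtain W2 d2 where W2: "W2 \<in> carrier_mat n' n'" "transpose_mat W2 * W2 = 1\<^sub>m n'"
    "M' = W2 * diagm n' d2 * transpose_mat W2" "\<forall>i j. i \<le> j \<longrightarrow> j < n' \<longrightarrow> d2 j \<le> d2 i"
    "\<forall>i<n'. poly (char_poly M') (d2 i) = 0"
    using Suc.IH[OF M' M'sym] by blast
  define E where "E = mat 1 1 (\<lambda>_. e)"
  have E: "E \<in> carrier_mat 1 1" unfolding E_def by auto
  have M1block: "M1 = four_block_mat E (0\<^sub>m 1 n') (0\<^sub>m n' 1) M'"
  proof (rule eq_matI)
    fix i j assume "i < dim_row (four_block_mat E (0\<^sub>m 1 n') (0\<^sub>m n' 1) M')"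
      "j < dim_col (four_block_mat E (0\<^sub>m 1 n') (0\<^sub>m n' 1) M')"
    then have ij: "i < n" "j < n" using E M' n_def by auto
    show "M1 $$ (i,j) = four_block_mat E (0\<^sub>m 1 n') (0\<^sub>m n' 1) M' $$ (i,j)"
      using ij E M' M1col M1row unfolding M'_def E_def n_def
      by (cases i; cases j) auto
  qed (use M1 E M' n_def in auto)
  have MW: "M = W0 * M1 * transpose_mat W0"
  proof -
    have "W0 * M1 * transpose_mat W0 = (W0 * transpose_mat W0) * M * (W0 * transpose_mat W0)"
      unfolding M1_def using W0 M by (simp add: assoc_mult_mat[of _ n n _ n _ n])
    then show ?thesis using W0' M by simp
  qed
  have "similar_mat_wit M M1 W0 (transpose_mat W0)"
    unfolding similar_mat_wit_def Let_def using M M1 W0 W0' MW by auto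
  then have simM: "similar_mat M M1" unfolding similar_mat_def by blast
  have cpM: "char_poly M = char_poly E * char_poly M'"
    using char_poly_similar[OF simM] char_poly_four_block_zeros_col[OF E _ M', of "0\<^sub>m 1 n'"] M1block
    by simp
  have rootM': "poly (char_poly M) x = 0" if "poly (char_poly M') x = 0" for x
    using that cpM by simp
  define d where "d = (\<lambda>i. if i = 0 then e else d2 (i - 1))"
  define Bk where "Bk = four_block_mat (1\<^sub>m 1) (0\<^sub>m 1 n') (0\<^sub>m n' 1) W2"
  have Bk: "Bk \<in> carrier_mat n n" unfolding Bk_def n_def using W2 by auto
  have BkT: "transpose_mat Bk = four_block_mat (1\<^sub>m 1) (0\<^sub>m 1 n') (0\<^sub>m n' 1) (transpose_mat W2)"
    unfolding Bk_def using W2 by (subst transpose_four_block_mat) auto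
  have BkTBk: "transpose_mat Bk * Bk = 1\<^sub>m n"
    unfolding BkT unfolding Bk_def using W2 
    by (subst mult_four_block_mat[where ?nr1.0=1 and ?n1.0=1 and ?nr2.0=n' and ?n2.0=n' and ?nc1.0=1 and ?nc2.0=n']) (auto simp: n_def left_mult_zero_mat right_mult_zero_mat)
  have Dblock: "diagm n d = four_block_mat E (0\<^sub>m 1 n') (0\<^sub>m n' 1) (diagm n' d2)"
    by (rule eq_matI) (auto simp: diagm_def E_def d_def n_def)
  have BDB: "Bk * diagm n d * transpose_mat Bk = M1"
  proof -
    have h1: "Bk * diagm n d = four_block_mat E (0\<^sub>m 1 n') (0\<^sub>m n' 1) (W2 * diagm n' d2)"
      unfolding Dblock Bk_def using W2 E
      by (subst mult_four_block_mat[where ?nr1.0=1 and ?n1.0=1 and ?nr2.0=n' and ?n2.0=n' and ?nc1.0=1 and ?nc2.0=n']) (auto simp: left_mult_zero_mat right_mult_zero_mat)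
    have "Bk * diagm n d * transpose_mat Bk = four_block_mat E (0\<^sub>m 1 n') (0\<^sub>m n' 1) (W2 * diagm n' d2) * four_block_mat (1\<^sub>m 1) (0\<^sub>m 1 n') (0\<^sub>m n' 1) (transpose_mat W2)"
      unfolding h1 BkT ..
    also have "\<dots> = four_block_mat E (0\<^sub>m 1 n') (0\<^sub>m n' 1) (W2 * diagm n' d2 * transpose_mat W2)"
      using W2 E
      by (subst mult_four_block_mat[where ?nr1.0=1 and ?n1.0=1 and ?nr2.0=n' and ?n2.0=n' and ?nc1.0=1 and ?nc2.0=n']) (auto simp: left_mult_zero_mat right_mult_zero_mat)
    finally show ?thesis using M1block W2(3) by simp
  qed
  define W where "W = W0 * Bk"
  have W: "W \<in> carrier_mat n n" unfolding W_def using W0 Bk by auto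
  have WT: "transpose_mat W = transpose_mat Bk * transpose_mat W0"
    unfolding W_def using W0 Bk by (simp add: transpose_mult)
  have "transpose_mat W * W = 1\<^sub>m n"
  proof -
    have "transpose_mat W * W = transpose_mat Bk * (transpose_mat W0 * W0) * Bk"
      unfolding WT unfolding W_def using W0(1) Bk by (simp add: assoc_mult_mat[of _ n n _ n _ n])
    then show ?thesis using W0 Bk BkTBk by simp
  qed
  moreover have "M = W * diagm n d * transpose_mat W"
  proof -
    have c1: "diagm n d * transpose_mat Bk \<in> carrier_mat n n" "Bk * (diagm n d * transpose_mat Bk) \<in> carrier_mat n n"
      using Bk by auto
    have "W * diagm n d * transpose_mat W = W0 * (Bk * diagm n d * transpose_mat Bk) * transpose_mat W0"
      unfolding WT unfolding W_def using mult5[OF W0(1) Bk diagm_carrier[of n d], of "transpose_mat Bk" "transpose_mat W0"] W0(1) Bk by simp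
    also have "\<dots> = W0 * M1 * transpose_mat W0" using BDB by simp
    also have "\<dots> = (W0 * transpose_mat W0) * M * (W0 * transpose_mat W0)"
      unfolding M1_def using W0 M by (simp add: assoc_mult_mat[of _ n n _ n _ n])
    also have "\<dots> = M" using W0' M by simp
    finally show ?thesis by simp
  qed
  moreover have "\<forall>i j. i \<le> j \<longrightarrow> j < n \<longrightarrow> d j \<le> d i"
  proof (intro allI impI)
    fix i j assume ij: "i \<le> j" "j < n"
    show "d j \<le> d i"
    proof (cases "i = 0")
      case True
      show ?thesis
      proof (cases "j = 0")
        case False
        then have "poly (char_poly M') (d2 (j - 1)) = 0" using W2(5) ij n_def by auto
        then show ?thesis using True False emax rootM' unfolding d_def by auto
      qed (use True d_def in auto)
    next
      case False
      then show ?thesis using W2(4) ij n_def unfolding d_def by auto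
    qed
  qed
  moreover have "\<forall>i<n. poly (char_poly M) (d i) = 0"
    using eR rootM' W2(5) unfolding d_def n_def by auto
  ultimately show ?case using W unfolding n_def by blast
qed




lemma proots_linears: "proots (\<Prod>a\<leftarrow>xs. [:- a, 1:]) = mset (xs :: real list)"
proof -
  have "proots (\<Prod>a\<leftarrow>xs. [:- a, 1:]) = sum_list (map proots (map (\<lambda>a. [:- a, 1:]) xs))"
  proof -
    have "0 \<notin> (\<lambda>a. [:- a, 1:]) ` set xs" by (auto simp: pCons_eq_0_iff)
    then show ?thesis using proots_prod_list[of "map (\<lambda>a. [:- a, 1:]) xs"] by simp
  qed
  also have "\<dots> = mset xs" by (induction xs) auto
  finally show ?thesis .
qed

lemma sing_vals_decomp:
  fixes B W :: "real mat"
  assumes B: "B \<in> carrier_mat m n" and W: "W \<in> carrier_mat n n" "transpose_mat W * W = 1\<^sub>m n"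
    and dec: "transpose_mat B * B = W * diagm n d * transpose_mat W"
    and sorted: "\<forall>i j. i \<le> j \<longrightarrow> j < n \<longrightarrow> d j \<le> d i"
  shows "sing_vals B = map (\<lambda>j. sqrt (d j)) [0..<n]"
proof -
  have W': "W * transpose_mat W = 1\<^sub>m n" using orth_square_right[OF W] .
  have "similar_mat_wit (transpose_mat B * B) (diagm n d) W (transpose_mat W)"
    unfolding similar_mat_wit_def Let_def using B W W' dec by auto
  then have "similar_mat (transpose_mat B * B) (diagm n d)" unfolding similar_mat_def by blast
  then have cp: "char_poly (transpose_mat B * B) = char_poly (diagm n d)" by (rule char_poly_similar)
  have ut: "upper_triangular (diagm n d)" unfolding upper_triangular_def diagm_def by auto
  have dm: "diag_mat (diagm n d) = map d [0..<n]" unfolding diag_mat_def diagm_def by auto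
  define xs where "xs = map d [0..<n]"
  have cp2: "char_poly (transpose_mat B * B) = (\<Prod>a\<leftarrow>xs. [:- a, 1:])"
    unfolding cp xs_def dm[symmetric] by (rule char_poly_upper_triangular[OF diagm_carrier ut])
  have srt: "sorted (rev xs)" unfolding sorted_iff_nth_mono xs_def
    using sorted by (auto simp: rev_nth)
  have "sort xs = rev xs" by (rule properties_for_sort) (use srt in auto)
  have "sing_vals B = map sqrt (rev (sort xs))"
    by (simp only: sing_vals_def cp2 proots_linears sorted_list_of_multiset_mset)
  then show ?thesis using \<open>sort xs = rev xs\<close> by (simp add: xs_def)
qed

lemma diagm_quad: assumes "y \<in> carrier_vec n"
  shows "y \<bullet> (diagm n d *\<^sub>v y) = (\<Sum>r<n. d r * (y $ r)^2)"
proof -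
  have "(diagm n d *\<^sub>v y) $ r = d r * y $ r" if "r < n" for r
    using that assms unfolding diagm_def
    by (simp add: scalar_prod_def if_distrib[of "\<lambda>x. x * _"] sum.If_cases lessThan_atLeast0 cong: if_cong)
  then show ?thesis using assms unfolding scalar_prod_def[of y]
    by (auto simp: lessThan_atLeast0 power2_eq_square intro!: sum.cong)
qed



lemma kernel_exists:
  fixes f :: "nat \<Rightarrow> real vec"
  assumes pN: "p < N" and f: "\<And>r. r < p \<Longrightarrow> f r \<in> carrier_vec N"
  shows "\<exists>u \<in> carrier_vec N. u \<noteq> 0\<^sub>v N \<and> (\<forall>r<p. f r \<bullet> u = 0)"
proof -
  define c where "c = (\<lambda>i. if i < p then f i else 0\<^sub>v N)"
  define M where "M = mat\<^sub>r N N (\<lambda>i. if i = p then 0\<^sub>v N else c i)"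
  have cc: "c \<in> {0..<N} \<rightarrow> carrier_vec N" unfolding c_def using f by auto
  have "det M = 0" unfolding M_def by (rule det_row_0[OF pN cc])
  moreover have M: "M \<in> carrier_mat N N" unfolding M_def by auto
  ultimately obtain u where u: "u \<in> carrier_vec N" "u \<noteq> 0\<^sub>v N" "M *\<^sub>v u = 0\<^sub>v N"
    using det_0_iff_vec_prod_zero[OF M] by auto
  have "f r \<bullet> u = 0" if r: "r < p" for r
  proof -
    have "(M *\<^sub>v u) $ r = 0" using u(3) r pN by simp
    moreover have "row M r = f r" unfolding M_def using r pN f[OF r] by (simp add: c_def)
    ultimately show ?thesis using M r pN by simp
  qed
  then show ?thesis using u by blast
qed

lemma normB:
  fixes B W :: "real mat"
  assumes B: "B \<in> carrier_mat m n" and W: "W \<in> carrier_mat n n" "transpose_mat W * W = 1\<^sub>m n"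
    and dec: "transpose_mat B * B = W * diagm n d * transpose_mat W"
    and y: "y \<in> carrier_vec n"
  shows "(B *\<^sub>v (W *\<^sub>v y)) \<bullet> (B *\<^sub>v (W *\<^sub>v y)) = (\<Sum>r<n. d r * (y $ r)^2)"
proof -
  have Wy: "W *\<^sub>v y \<in> carrier_vec n" using W y by auto
  have "(B *\<^sub>v (W *\<^sub>v y)) \<bullet> (B *\<^sub>v (W *\<^sub>v y)) = (W *\<^sub>v y) \<bullet> ((W * diagm n d * transpose_mat W) *\<^sub>v (W *\<^sub>v y))"
    using quad_form[OF B Wy] dec by simp
  also have "(W * diagm n d * transpose_mat W) *\<^sub>v (W *\<^sub>v y) = W *\<^sub>v (diagm n d *\<^sub>v y)"
  proof -
    have "(W * diagm n d * transpose_mat W) *\<^sub>v (W *\<^sub>v y) = (W * diagm n d) *\<^sub>v (transpose_mat W *\<^sub>v (W *\<^sub>v y))"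
      using W y by (simp add: assoc_mult_mat_vec[of _ n n _ n])
    also have "transpose_mat W *\<^sub>v (W *\<^sub>v y) = y"
      using W y by (simp add: assoc_mult_mat_vec[of _ n n _ n, symmetric])
    finally show ?thesis using W y by (simp add: assoc_mult_mat_vec[of _ n n _ n])
  qed
  also have "(W *\<^sub>v y) \<bullet> (W *\<^sub>v (diagm n d *\<^sub>v y)) = (transpose_mat W *\<^sub>v (W *\<^sub>v y)) \<bullet> (diagm n d *\<^sub>v y)"
  proof -
    have "diagm n d *\<^sub>v y \<in> carrier_vec n" using y by (simp add: mult_mat_vec_carrier[OF diagm_carrier])
    then show ?thesis using sprod_transpose[OF W(1), of "diagm n d *\<^sub>v y" "W *\<^sub>v y"] W y by simp
  qed
  also have "transpose_mat W *\<^sub>v (W *\<^sub>v y) = y"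
    using W y by (simp add: assoc_mult_mat_vec[of _ n n _ n, symmetric])
  finally show ?thesis using diagm_quad[OF y] by simp
qed

lemma sprod_sum: "(y::real vec) \<in> carrier_vec n \<Longrightarrow> y \<bullet> y = (\<Sum>r<n. (y $ r)^2)"
  unfolding scalar_prod_def power2_eq_square by (simp add: lessThan_atLeast0)

lemma diag_upper:
  assumes sorted: "\<forall>i j. i \<le> j \<longrightarrow> j < n \<longrightarrow> d j \<le> (d i :: real)" and jn: "j < n"
    and z: "\<forall>r<n. r < j \<longrightarrow> y $ r = 0"
  shows "(\<Sum>r<n. d r * (y $ r)^2) \<le> d j * (\<Sum>r<n. (y $ r)^2)"
  unfolding sum_distrib_left
proof (rule sum_mono)
  fix r assume r: "r \<in> {..<n}"
  show "d r * (y $ r)^2 \<le> d j * (y $ r)^2"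
  proof (cases "r < j")
    case True then show ?thesis using z r by auto
  next
    case False then show ?thesis using sorted r by (auto intro: mult_right_mono)
  qed
qed

lemma diag_lower:
  assumes sorted: "\<forall>i j. i \<le> j \<longrightarrow> j < n \<longrightarrow> d j \<le> (d i :: real)" and jn: "j < n"
    and z: "\<forall>r<n. j < r \<longrightarrow> y $ r = 0"
  shows "d j * (\<Sum>r<n. (y $ r)^2) \<le> (\<Sum>r<n. d r * (y $ r)^2)"
  unfolding sum_distrib_left
proof (rule sum_mono)
  fix r assume r: "r \<in> {..<n}"
  show "d j * (y $ r)^2 \<le> d r * (y $ r)^2"
  proof (cases "j < r")
    case True then show ?thesis using z r by auto
  next
    case False then show ?thesis using sorted r jn by (auto intro: mult_right_mono)
  qed
qed




lemma vnorm_add: assumes v: "v \<in> carrier_vec n" and w: "w \<in> carrier_vec n"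
  shows "vnorm (v + w) \<le> vnorm v + vnorm (w :: real vec)"
proof -
  have "(v + w) \<bullet> (v + w) = v \<bullet> v + 2 * (v \<bullet> w) + w \<bullet> w"
    using v w by (simp add: add_scalar_prod_distrib[of _ n] scalar_prod_add_distrib[of _ n] comm_scalar_prod[of w n v])
  also have "\<dots> \<le> (vnorm v)^2 + 2 * (vnorm v * vnorm w) + (vnorm w)^2"
    using vec_CS_abs[OF v w] by (simp add: vnorm_sq)
  also have "\<dots> = (vnorm v + vnorm w)^2" by (simp add: power2_eq_square algebra_simps)
  finally have "(vnorm (v + w))^2 \<le> (vnorm v + vnorm w)^2" by (simp add: vnorm_sq)
  then show ?thesis using vnorm_ge0 by (meson add_nonneg_nonneg power2_le_imp_le)
qed

lemma proj_apply: assumes X: "X \<in> carrier_mat m c" and w: "w \<in> carrier_vec m"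
  shows "(1\<^sub>m m - X * transpose_mat X) *\<^sub>v w = w - X *\<^sub>v (transpose_mat X *\<^sub>v (w::real vec))"
proof -
  have "(1\<^sub>m m - X * transpose_mat X) *\<^sub>v w = 1\<^sub>m m *\<^sub>v w - (X * transpose_mat X) *\<^sub>v w"
    using X w by (subst minus_mult_distrib_mat_vec[of _ m m]) auto
  also have "(X * transpose_mat X) *\<^sub>v w = X *\<^sub>v (transpose_mat X *\<^sub>v w)"
    using X w by (simp add: assoc_mult_mat_vec[of _ m c _ m])
  finally show ?thesis using w by simp
qed

lemma proj_norm: assumes X: "X \<in> carrier_mat m c" "transpose_mat X * X = 1\<^sub>m c" and w: "w \<in> carrier_vec m"
  shows "((1\<^sub>m m - X * transpose_mat X) *\<^sub>v w) \<bullet> ((1\<^sub>m m - X * transpose_mat X) *\<^sub>v w)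
     = w \<bullet> w - (transpose_mat X *\<^sub>v w) \<bullet> (transpose_mat X *\<^sub>v (w::real vec))"
proof -
  define v where "v = transpose_mat X *\<^sub>v w"
  have v: "v \<in> carrier_vec c" unfolding v_def using X w by auto
  have Xv: "X *\<^sub>v v \<in> carrier_vec m" using X v by auto
  have a: "w \<bullet> (X *\<^sub>v v) = v \<bullet> v"
    using sprod_transpose[OF X(1) v w] unfolding v_def by simp
  have b: "(X *\<^sub>v v) \<bullet> (X *\<^sub>v v) = v \<bullet> v" using orth_sprod[OF X v] .
  have c: "(X *\<^sub>v v) \<bullet> w = v \<bullet> v" using a comm_scalar_prod[OF w Xv] by simp
  have "(w - X *\<^sub>v v) \<bullet> (w - X *\<^sub>v v) = w \<bullet> w - w \<bullet> (X *\<^sub>v v) - ((X *\<^sub>v v) \<bullet> w - (X *\<^sub>v v) \<bullet> (X *\<^sub>v v))"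
    using w Xv by (simp add: minus_scalar_prod_distrib[of _ m] scalar_prod_minus_distrib[of _ m])
  also have "\<dots> = w \<bullet> w - v \<bullet> v" using a b c by simp
  finally show ?thesis unfolding proj_apply[OF X(1) w] v_def by simp
qed

lemma proj_norm_le: assumes X: "X \<in> carrier_mat m c" "transpose_mat X * X = 1\<^sub>m c" and w: "w \<in> carrier_vec m"
  shows "vnorm ((1\<^sub>m m - X * transpose_mat X) *\<^sub>v w) \<le> vnorm (w::real vec)"
proof -
  have "((1\<^sub>m m - X * transpose_mat X) *\<^sub>v w) \<bullet> ((1\<^sub>m m - X * transpose_mat X) *\<^sub>v w) \<le> w \<bullet> w"
    using proj_norm[OF X w] sprod_self_ge0[of "transpose_mat X *\<^sub>v w"] by simp
  then show ?thesis unfolding vnorm_def by simp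
qed

lemma kernel3:
  fixes f1 f2 f3 :: "nat \<Rightarrow> real vec"
  assumes pN: "p1 + p2 + p3 < N"
    and f1: "\<And>r. r < p1 \<Longrightarrow> f1 r \<in> carrier_vec N"
    and f2: "\<And>r. r < p2 \<Longrightarrow> f2 r \<in> carrier_vec N"
    and f3: "\<And>r. r < p3 \<Longrightarrow> f3 r \<in> carrier_vec N"
  shows "\<exists>u \<in> carrier_vec N. u \<noteq> 0\<^sub>v N \<and> (\<forall>r<p1. f1 r \<bullet> u = 0) \<and> (\<forall>r<p2. f2 r \<bullet> u = 0)
           \<and> (\<forall>r<p3. f3 r \<bullet> u = 0)"
proof -
  define f where "f = (\<lambda>r. if r < p1 then f1 r else if r < p1 + p2 then f2 (r - p1) else f3 (r - p1 - p2))"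
  have fc: "\<forall>r. r < p1 + p2 + p3 \<longrightarrow> f r \<in> carrier_vec N"
    unfolding f_def using f1 f2 f3 by auto
  obtain u where u: "u \<in> carrier_vec N" "u \<noteq> 0\<^sub>v N"
    "\<forall>r<p1 + p2 + p3. f r \<bullet> u = 0" using kernel_exists[of "p1 + p2 + p3" N f] fc pN by blast
  have "\<forall>r<p1. f1 r \<bullet> u = 0"
  proof (intro allI impI)
    fix r assume "r < p1" then show "f1 r \<bullet> u = 0" using u(3)[rule_format, of r] unfolding f_def by auto
  qed
  moreover have "\<forall>r<p2. f2 r \<bullet> u = 0"
  proof (intro allI impI)
    fix r assume "r < p2" then show "f2 r \<bullet> u = 0" using u(3)[rule_format, of "p1 + r"] unfolding f_def by auto
  qed
  moreover have "\<forall>r<p3. f3 r \<bullet> u = 0"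
  proof (intro allI impI)
    fix r assume "r < p3" then show "f3 r \<bullet> u = 0" using u(3)[rule_format, of "p1 + p2 + r"] unfolding f_def by auto
  qed
  ultimately show ?thesis using u by blast
qed

lemma append_sprod: assumes "g \<in> carrier_vec n" "h \<in> carrier_vec b" "u \<in> carrier_vec (n + b)"
  shows "(g @\<^sub>v h) \<bullet> u = g \<bullet> vec_first u n + h \<bullet> vec_last u (b::nat)"
proof -
  have "u = vec_first u n @\<^sub>v vec_last u b" using assms(3) by simp
  then have "(g @\<^sub>v h) \<bullet> u = (g @\<^sub>v h) \<bullet> (vec_first u n @\<^sub>v vec_last u b)" by simp
  also have "\<dots> = g \<bullet> vec_first u n + h \<bullet> vec_last u b"
    by (rule scalar_prod_append) (use assms in auto)
  finally show ?thesis .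
qed

lemma append_zero: assumes "u \<in> carrier_vec (n + b)" "vec_first u n = 0\<^sub>v n" "vec_last u b = 0\<^sub>v b"
  shows "u = 0\<^sub>v (n + b)"
proof -
  have "u = vec_first u n @\<^sub>v vec_last u b" using assms(1) by simp
  moreover have "0\<^sub>v n @\<^sub>v 0\<^sub>v b = (0\<^sub>v (n + b) :: 'a::zero vec)" by (intro eq_vecI) auto
  ultimately show ?thesis using assms by simp
qed




lemma principal_angle:
  fixes Q Uk :: "real mat"
  assumes Q: "Q \<in> carrier_mat m b" "transpose_mat Q * Q = 1\<^sub>m b"
    and Uk: "Uk \<in> carrier_mat m k" "transpose_mat Uk * Uk = 1\<^sub>m k"
    and z: "z \<in> carrier_vec b"
    and eps: "\<And>w. w \<in> carrier_vec m \<Longrightarrow>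
       vnorm (((1\<^sub>m m - Uk * transpose_mat Uk) * (Q * transpose_mat Q)) *\<^sub>v w) \<le> \<epsilon> * vnorm w"
    and e0: "\<epsilon> \<ge> 0"
  shows "vnorm ((1\<^sub>m m - Q * transpose_mat Q) *\<^sub>v (Uk *\<^sub>v (transpose_mat Uk *\<^sub>v (Q *\<^sub>v z))))
          \<le> \<epsilon> * vnorm (Uk *\<^sub>v (transpose_mat Uk *\<^sub>v (Q *\<^sub>v z)))"
proof -
  define w where "w = Q *\<^sub>v z"
  define t where "t = transpose_mat Uk *\<^sub>v w"
  define y where "y = Uk *\<^sub>v t"
  have w: "w \<in> carrier_vec m" unfolding w_def using Q z by auto
  have t: "t \<in> carrier_vec k" unfolding t_def using Uk w by auto
  have y: "y \<in> carrier_vec m" unfolding y_def using Uk t by auto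
  define Z where "Z = z \<bullet> z"
  define Y where "Y = y \<bullet> y"
  define T where "T = (transpose_mat Q *\<^sub>v y) \<bullet> (transpose_mat Q *\<^sub>v y)"
  have wZ: "w \<bullet> w = Z" unfolding w_def Z_def using orth_sprod[OF Q z] .
  have Yt: "Y = t \<bullet> t" unfolding Y_def y_def using orth_sprod[OF Uk t] .
  have QQw: "(Q * transpose_mat Q) *\<^sub>v w = w"
  proof -
    have "(Q * transpose_mat Q) *\<^sub>v w = Q *\<^sub>v (transpose_mat Q *\<^sub>v (Q *\<^sub>v z))"
      unfolding w_def using Q z by (simp add: assoc_mult_mat_vec[of _ m b _ m])
    also have "transpose_mat Q *\<^sub>v (Q *\<^sub>v z) = z"
      using Q z by (simp add: assoc_mult_mat_vec[of _ b m _ b, symmetric])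
    finally show ?thesis unfolding w_def .
  qed
  have "((1\<^sub>m m - Uk * transpose_mat Uk) * (Q * transpose_mat Q)) *\<^sub>v w = (1\<^sub>m m - Uk * transpose_mat Uk) *\<^sub>v w"
  proof -
    have cP: "1\<^sub>m m - Uk * transpose_mat Uk \<in> carrier_mat m m" using Uk by auto
    have cQ: "Q * transpose_mat Q \<in> carrier_mat m m" using Q by auto
    show ?thesis using assoc_mult_mat_vec[OF cP cQ w] QQw by simp
  qed
  then have "vnorm ((1\<^sub>m m - Uk * transpose_mat Uk) *\<^sub>v w) \<le> \<epsilon> * vnorm w" using eps[OF w] by simp
  then have "(vnorm ((1\<^sub>m m - Uk * transpose_mat Uk) *\<^sub>v w))^2 \<le> (\<epsilon> * vnorm w)^2"
    using vnorm_ge0 by (meson power_mono)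
  then have h2: "Z - Y \<le> \<epsilon>^2 * Z"
    using proj_norm[OF Uk w] unfolding vnorm_sq power_mult_distrib wZ Yt t_def by simp
  have Y0: "Y \<ge> 0" unfolding Y_def by (rule sprod_self_ge0)
  have YZ: "Y \<le> Z"
    using proj_norm[OF Uk w] sprod_self_ge0[of "(1\<^sub>m m - Uk * transpose_mat Uk) *\<^sub>v w"]
    unfolding wZ Yt t_def by simp
  have T0: "T \<ge> 0" unfolding T_def by (rule sprod_self_ge0)
  have Z0: "Z \<ge> 0" unfolding Z_def by (rule sprod_self_ge0)
  have QTy: "(transpose_mat Q *\<^sub>v y) \<bullet> z = Y"
  proof -
    have "(transpose_mat Q *\<^sub>v y) \<bullet> z = y \<bullet> w" using sprod_transpose[OF Q(1) z y] unfolding w_def by simp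
    also have "\<dots> = (transpose_mat Uk *\<^sub>v w) \<bullet> t"
    proof -
      have "y \<bullet> w = w \<bullet> y" using comm_scalar_prod[OF y w] .
      also have "\<dots> = (transpose_mat Uk *\<^sub>v w) \<bullet> t" unfolding y_def using sprod_transpose[OF Uk(1) t w] .
      finally show ?thesis .
    qed
    finally show ?thesis unfolding Yt t_def by simp
  qed
  have QTyc: "transpose_mat Q *\<^sub>v y \<in> carrier_vec b" using Q y by auto
  have h1: "Y * Y \<le> T * Z"
    using vec_CS[OF QTyc z] unfolding QTy T_def Z_def by (simp add: power2_eq_square)
  have main: "Y - T \<le> \<epsilon>^2 * Y"
  proof (cases "Z = 0")
    case True
    then have "Y = 0" using YZ Y0 by simp
    then show ?thesis using T0 by simp
  next
    case False
    then have Zp: "Z > 0" using Z0 by simp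
    have "Y * ((1 - \<epsilon>^2) * Z) \<le> Y * Y" using h2 Y0 by (intro mult_left_mono) (auto simp: algebra_simps)
    also have "\<dots> \<le> T * Z" by (rule h1)
    finally have "((1 - \<epsilon>^2) * Y) * Z \<le> T * Z" by (simp add: algebra_simps)
    then have "(1 - \<epsilon>^2) * Y \<le> T" using Zp by (simp add: mult_le_cancel_right)
    then show ?thesis by (simp add: algebra_simps)
  qed
  have "(vnorm ((1\<^sub>m m - Q * transpose_mat Q) *\<^sub>v y))^2 \<le> (\<epsilon> * vnorm y)^2"
    using proj_norm[OF Q y] main unfolding vnorm_sq power_mult_distrib Y_def T_def by simp
  then have "vnorm ((1\<^sub>m m - Q * transpose_mat Q) *\<^sub>v y) \<le> \<epsilon> * vnorm y"
    using e0 vnorm_ge0 by (meson mult_nonneg_nonneg power2_le_imp_le)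
  then show ?thesis unfolding y_def t_def w_def .
qed




lemma sv_upper:
  fixes B W :: "real mat"
  assumes B: "B \<in> carrier_mat m n" and W: "W \<in> carrier_mat n n" "transpose_mat W * W = 1\<^sub>m n"
    and dec: "transpose_mat B * B = W * diagm n d * transpose_mat W"
    and sorted: "\<forall>i j. i \<le> j \<longrightarrow> j < n \<longrightarrow> d j \<le> d i"
    and y: "y \<in> carrier_vec n" and jn: "j < n" and z: "\<forall>r<n. r < j \<longrightarrow> y $ r = 0"
  shows "(B *\<^sub>v (W *\<^sub>v y)) \<bullet> (B *\<^sub>v (W *\<^sub>v y)) \<le> d j * (y \<bullet> y)"
  using normB[OF B W dec y] diag_upper[OF sorted jn z] sprod_sum[OF y] by simp

lemma sv_lower:
  fixes B W :: "real mat"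
  assumes B: "B \<in> carrier_mat m n" and W: "W \<in> carrier_mat n n" "transpose_mat W * W = 1\<^sub>m n"
    and dec: "transpose_mat B * B = W * diagm n d * transpose_mat W"
    and sorted: "\<forall>i j. i \<le> j \<longrightarrow> j < n \<longrightarrow> d j \<le> d i"
    and y: "y \<in> carrier_vec n" and jn: "j < n" and z: "\<forall>r<n. j < r \<longrightarrow> y $ r = 0"
  shows "d j * (y \<bullet> y) \<le> (B *\<^sub>v (W *\<^sub>v y)) \<bullet> (B *\<^sub>v (W *\<^sub>v y))"
  using normB[OF B W dec y] diag_lower[OF sorted jn z] sprod_sum[OF y] by simp

lemma orth_back: assumes W: "W \<in> carrier_mat n n" "transpose_mat W * W = 1\<^sub>m n" and x: "x \<in> carrier_vec n"
  shows "W *\<^sub>v (transpose_mat W *\<^sub>v x) = (x :: real vec)"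
  using orth_square_right[OF W] W x by (simp add: assoc_mult_mat_vec[of _ n n _ n, symmetric])

lemma orth_back': assumes W: "W \<in> carrier_mat r n" "transpose_mat W * W = 1\<^sub>m n" and x: "x \<in> carrier_vec n"
  shows "transpose_mat W *\<^sub>v (W *\<^sub>v x) = (x :: real vec)"
  using W x by (simp add: assoc_mult_mat_vec[of _ n r _ n, symmetric])

lemma svd_ata:
  fixes A U S V :: "real mat"
  assumes nm: "n \<le> m" and A: "A \<in> carrier_mat m n"
    and U: "U \<in> carrier_mat m m" "transpose_mat U * U = 1\<^sub>m m"
    and V: "V \<in> carrier_mat n n"
    and S: "S \<in> carrier_mat m n" "\<And>i j. i < m \<Longrightarrow> j < n \<Longrightarrow> i \<noteq> j \<Longrightarrow> S $$ (i,j) = 0"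
    and svd: "A = U * S * transpose_mat V"
  shows "transpose_mat A * A = V * diagm n (\<lambda>r. (S $$ (r,r))^2) * transpose_mat V"
proof -
  have US: "U * S \<in> carrier_mat m n" using U S by auto
  have VT: "transpose_mat V \<in> carrier_mat n n" using V by auto
  have ST: "transpose_mat S \<in> carrier_mat n m" using S by auto
  have UT: "transpose_mat U \<in> carrier_mat m m" using U by auto
  have STUT: "transpose_mat S * transpose_mat U \<in> carrier_mat n m" using S U by auto
  have USVT: "U * S * transpose_mat V \<in> carrier_mat m n" using U S V by auto
  have tA: "transpose_mat A = V * (transpose_mat S * transpose_mat U)"
    unfolding svd using transpose_mult[OF US VT] transpose_mult[OF U(1) S(1)] by simp
  have StS: "transpose_mat S * S = diagm n (\<lambda>r. (S $$ (r,r))^2)"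
  proof (rule eq_matI)
    fix i j assume "i < dim_row (diagm n (\<lambda>r. (S $$ (r,r))^2))" "j < dim_col (diagm n (\<lambda>r. (S $$ (r,r))^2))"
    then have i: "i < n" and j: "j < n" by auto
    have "(transpose_mat S * S) $$ (i,j) = (\<Sum>r\<in>{0..<m}. S $$ (r,i) * S $$ (r,j))"
      using S i j by (simp add: scalar_prod_def)
    also have "\<dots> = (if i = j then (S $$ (i,i))^2 else 0)"
    proof (cases "i = j")
      case True
      have "(\<Sum>r\<in>{0..<m}. S $$ (r,i) * S $$ (r,j)) = S $$ (i,i) * S $$ (i,j) + (\<Sum>r\<in>{0..<m}-{i}. S $$ (r,i) * S $$ (r,j))"
        by (rule sum.remove) (use i nm in auto)
      moreover have "(\<Sum>r\<in>{0..<m}-{i}. S $$ (r,i) * S $$ (r,j)) = 0"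
        by (intro sum.neutral ballI) (use S(2) i nm in force)
      ultimately show ?thesis using True by (simp add: power2_eq_square)
    next
      case False
      have "(\<Sum>r\<in>{0..<m}. S $$ (r,i) * S $$ (r,j)) = 0"
      proof (intro sum.neutral ballI)
        fix r assume r: "r \<in> {0..<m}"
        show "S $$ (r,i) * S $$ (r,j) = 0"
        proof (cases "r = i")
          case True
          then have "S $$ (r,j) = 0" using S(2)[of r j] r j False by auto
          then show ?thesis by simp
        next
          case False
          then have "S $$ (r,i) = 0" using S(2)[of r i] r i by auto
          then show ?thesis by simp
        qed
      qed
      then show ?thesis using False by simp
    qed
    also have "\<dots> = diagm n (\<lambda>r. (S $$ (r,r))^2) $$ (i,j)" using i j by (simp add: diagm_def)
    finally show "(transpose_mat S * S) $$ (i,j) = diagm n (\<lambda>r. (S $$ (r,r))^2) $$ (i,j)" .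
  qed (use S in auto)
  have "transpose_mat A * A = V * (transpose_mat S * transpose_mat U) * (U * S * transpose_mat V)"
    unfolding tA using svd by simp
  also have "\<dots> = V * ((transpose_mat S * transpose_mat U) * (U * S * transpose_mat V))"
    by (rule assoc_mult_mat[OF V STUT USVT])
  also have "(transpose_mat S * transpose_mat U) * (U * S * transpose_mat V) = ((transpose_mat S * transpose_mat U) * (U * S)) * transpose_mat V"
    by (rule assoc_mult_mat[OF STUT US VT, symmetric])
  also have "(transpose_mat S * transpose_mat U) * (U * S) = transpose_mat S * (transpose_mat U * (U * S))"
    by (rule assoc_mult_mat[OF ST UT US])
  also have "transpose_mat U * (U * S) = (transpose_mat U * U) * S"
    by (rule assoc_mult_mat[OF UT U(1) S(1), symmetric])
  also have "\<dots> = S" using U S by simp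
  also have "V * (transpose_mat S * S * transpose_mat V) = V * (transpose_mat S * S) * transpose_mat V"
    by (rule assoc_mult_mat[OF V _ VT, symmetric]) (use S in auto)
  finally show ?thesis unfolding StS .
qed




lemma svd_apply:
  fixes A U S V :: "real mat"
  assumes A: "A \<in> carrier_mat m n" and U: "U \<in> carrier_mat m m"
    and V: "V \<in> carrier_mat n n" and S: "S \<in> carrier_mat m n"
    and svd: "A = U * S * transpose_mat V" and x: "x \<in> carrier_vec n"
  shows "A *\<^sub>v x = U *\<^sub>v (S *\<^sub>v (transpose_mat V *\<^sub>v x))"
proof -
  have "A *\<^sub>v x = (U * S) *\<^sub>v (transpose_mat V *\<^sub>v x)"
    unfolding svd using U S V x by (subst assoc_mult_mat_vec[of _ m n _ n]) auto
  also have "\<dots> = U *\<^sub>v (S *\<^sub>v (transpose_mat V *\<^sub>v x))"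
    using U S V x by (subst assoc_mult_mat_vec[of _ m m _ n]) auto
  finally show ?thesis .
qed

lemma S_apply:
  fixes S :: "real mat"
  assumes S: "S \<in> carrier_mat m n" "\<And>i j. i < m \<Longrightarrow> j < n \<Longrightarrow> i \<noteq> j \<Longrightarrow> S $$ (i,j) = 0"
    and a: "a \<in> carrier_vec n" and r: "r < m"
  shows "(S *\<^sub>v a) $ r = (if r < n then S $$ (r,r) * a $ r else 0)"
proof -
  have "(S *\<^sub>v a) $ r = (\<Sum>c\<in>{0..<n}. S $$ (r,c) * a $ c)" using S a r by (simp add: scalar_prod_def)
  also have "\<dots> = (if r < n then S $$ (r,r) * a $ r else 0)"
  proof (cases "r < n")
    case True
    have "(\<Sum>c\<in>{0..<n}. S $$ (r,c) * a $ c) = S $$ (r,r) * a $ r + (\<Sum>c\<in>{0..<n}-{r}. S $$ (r,c) * a $ c)"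
      by (rule sum.remove) (use True in auto)
    moreover have "(\<Sum>c\<in>{0..<n}-{r}. S $$ (r,c) * a $ c) = 0"
      by (intro sum.neutral ballI) (use S(2) r in auto)
    ultimately show ?thesis using True by simp
  next
    case False
    then show ?thesis by (intro trans[OF sum.neutral]) (use S(2) r in auto)
  qed
  finally show ?thesis .
qed

lemma L1:
  fixes A U S V Q B W :: "real mat"
  assumes nm: "n \<le> m" and A: "A \<in> carrier_mat m n"
    and U: "U \<in> carrier_mat m m" "transpose_mat U * U = 1\<^sub>m m"
    and V: "V \<in> carrier_mat n n" "transpose_mat V * V = 1\<^sub>m n"
    and S: "S \<in> carrier_mat m n" "\<And>i j. i < m \<Longrightarrow> j < n \<Longrightarrow> i \<noteq> j \<Longrightarrow> S $$ (i,j) = 0"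
           "\<And>i. i < n \<Longrightarrow> S $$ (i,i) \<ge> 0"
           "\<And>i j. i \<le> j \<Longrightarrow> j < n \<Longrightarrow> S $$ (j,j) \<le> S $$ (i,i)"
    and svd: "A = U * S * transpose_mat V"
    and Q: "Q \<in> carrier_mat m b" "transpose_mat Q * Q = 1\<^sub>m b"
    and Bdef: "B = (1\<^sub>m m - Q * transpose_mat Q) * A"
    and W: "W \<in> carrier_mat n n" "transpose_mat W * W = 1\<^sub>m n"
    and dec: "transpose_mat B * B = W * diagm n d * transpose_mat W"
    and sorted: "\<forall>i j. i \<le> j \<longrightarrow> j < n \<longrightarrow> d j \<le> d i"
    and jb: "j0 + b < n"
  shows "(S $$ (j0 + b, j0 + b))^2 \<le> d j0"
proof -
  have B: "B \<in> carrier_mat m n" unfolding Bdef using A Q by auto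
  define M1 where "M1 = transpose_mat Q * A * V"
  define M2 where "M2 = transpose_mat W * V"
  have M1: "M1 \<in> carrier_mat b n" unfolding M1_def using Q A V by auto
  have M2: "M2 \<in> carrier_mat n n" unfolding M2_def using W V by auto
  have "\<exists>u \<in> carrier_vec n. u \<noteq> 0\<^sub>v n \<and> (\<forall>r<n - 1 - j0 - b. unit_vec n (j0 + b + 1 + r) \<bullet> u = 0)
     \<and> (\<forall>r<b. row M1 r \<bullet> u = 0) \<and> (\<forall>r<j0. row M2 r \<bullet> u = 0)"
    by (rule kernel3) (use jb M1 M2 in auto)
  then obtain a where a: "a \<in> carrier_vec n" "a \<noteq> 0\<^sub>v n"
    "\<forall>r<n - 1 - j0 - b. unit_vec n (j0 + b + 1 + r) \<bullet> a = 0"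
    "\<forall>r<b. row M1 r \<bullet> a = 0" "\<forall>r<j0. row M2 r \<bullet> a = 0" by blast
  have az: "\<forall>r<n. j0 + b < r \<longrightarrow> a $ r = 0"
  proof (intro allI impI)
    fix r assume r: "r < n" "j0 + b < r"
    have "r - (j0 + b + 1) < n - 1 - j0 - b" using r by auto
    then have "unit_vec n (j0 + b + 1 + (r - (j0 + b + 1))) \<bullet> a = 0" using a(3) by blast
    moreover have "j0 + b + 1 + (r - (j0 + b + 1)) = r" using r by auto
    ultimately have "unit_vec n r \<bullet> a = 0" by simp
    then show "a $ r = 0" using r a(1) by simp
  qed
  define x where "x = V *\<^sub>v a"
  have x: "x \<in> carrier_vec n" unfolding x_def using V a by auto
  have QAx: "transpose_mat Q *\<^sub>v (A *\<^sub>v x) = 0\<^sub>v b"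
  proof (rule eq_vecI)
    fix l assume "l < dim_vec (0\<^sub>v b :: real vec)"
    then have l: "l < b" by simp
    have "transpose_mat Q *\<^sub>v (A *\<^sub>v x) = M1 *\<^sub>v a"
      unfolding M1_def x_def using Q A V a
      by (simp add: assoc_mult_mat_vec[of _ b m _ n] assoc_mult_mat_vec[of _ b n _ n])
    then show "(transpose_mat Q *\<^sub>v (A *\<^sub>v x)) $ l = 0\<^sub>v b $ l" using a(4) l M1 by simp
  qed (use Q in auto)
  have Bx: "B *\<^sub>v x = A *\<^sub>v x"
  proof -
    have Ax: "A *\<^sub>v x \<in> carrier_vec m" using A x by auto
    have "B *\<^sub>v x = (1\<^sub>m m - Q * transpose_mat Q) *\<^sub>v (A *\<^sub>v x)"
      unfolding Bdef using A Q x by (subst assoc_mult_mat_vec[of _ m m _ n]) auto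
    also have "\<dots> = A *\<^sub>v x - Q *\<^sub>v (transpose_mat Q *\<^sub>v (A *\<^sub>v x))" by (rule proj_apply[OF Q(1) Ax])
    also have "\<dots> = A *\<^sub>v x"
    proof -
      have "Q *\<^sub>v 0\<^sub>v b = 0\<^sub>v m" using Q by (intro eq_vecI) (auto simp: scalar_prod_def)
      then show ?thesis unfolding QAx using Ax by (intro eq_vecI) auto
    qed
    finally show ?thesis .
  qed
  define y where "y = transpose_mat W *\<^sub>v x"
  have y: "y \<in> carrier_vec n" unfolding y_def using W x by auto
  have xWy: "x = W *\<^sub>v y" unfolding y_def using orth_back[OF W x] by simp
  have yz: "\<forall>r<n. r < j0 \<longrightarrow> y $ r = 0"
  proof (intro allI impI)
    fix r assume r: "r < n" "r < j0"
    have "y = M2 *\<^sub>v a" unfolding y_def x_def M2_def using W V a by (simp add: assoc_mult_mat_vec[of _ n n _ n])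
    then show "y $ r = 0" using a(5) r M2 by simp
  qed
  have yy: "y \<bullet> y = a \<bullet> a"
  proof -
    have "y \<bullet> y = x \<bullet> x" using orth_sprod[OF W y] xWy by simp
    also have "\<dots> = a \<bullet> a" unfolding x_def using orth_sprod[OF V a(1)] .
    finally show ?thesis .
  qed
  have j0n: "j0 < n" using jb by simp
  have up: "(B *\<^sub>v x) \<bullet> (B *\<^sub>v x) \<le> d j0 * (a \<bullet> a)"
    using sv_upper[OF B W dec sorted y j0n yz] xWy yy by simp
  have ATA: "transpose_mat A * A = V * diagm n (\<lambda>r. (S $$ (r,r))^2) * transpose_mat V"
    by (rule svd_ata[OF nm A U V(1) S(1,2) svd])
  have sortedS: "\<forall>i j. i \<le> j \<longrightarrow> j < n \<longrightarrow> (S $$ (j,j))^2 \<le> (S $$ (i,i))^2"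
    using S(3,4) by (auto intro: power_mono)
  have jbn: "j0 + b < n" by (rule jb)
  have low: "(S $$ (j0 + b, j0 + b))^2 * (a \<bullet> a) \<le> (A *\<^sub>v x) \<bullet> (A *\<^sub>v x)"
    using sv_lower[OF A V ATA sortedS a(1) jbn az] unfolding x_def by simp
  have apos: "a \<bullet> a > 0"
  proof -
    have "a \<bullet> a \<noteq> 0" using sprod_self_eq0[of a] a by auto
    then show ?thesis using sprod_self_ge0[of a] by simp
  qed
  have "(S $$ (j0 + b, j0 + b))^2 * (a \<bullet> a) \<le> d j0 * (a \<bullet> a)" using low up Bx by simp
  then show ?thesis using apos by (simp add: mult_le_cancel_right)
qed




lemma first_cols_facts:
  fixes U :: "real mat"
  assumes U: "U \<in> carrier_mat m m" "transpose_mat U * U = 1\<^sub>m m" and km: "k \<le> m"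
  shows "first_cols k U \<in> carrier_mat m k"
    "transpose_mat (first_cols k U) * first_cols k U = 1\<^sub>m k"
    "\<And>w r. w \<in> carrier_vec m \<Longrightarrow> r < k \<Longrightarrow> (transpose_mat (first_cols k U) *\<^sub>v w) $ r = (transpose_mat U *\<^sub>v w) $ r"
    "\<And>t i. t \<in> carrier_vec k \<Longrightarrow> i < m \<Longrightarrow> (first_cols k U *\<^sub>v t) $ i = (\<Sum>r\<in>{0..<k}. U $$ (i,r) * t $ r)"
proof -
  show c: "first_cols k U \<in> carrier_mat m k" unfolding first_cols_def using U by auto
  have colc: "col (first_cols k U) r = col U r" if "r < k" for r
    using that km U unfolding first_cols_def by (intro eq_vecI) auto
  show "transpose_mat (first_cols k U) * first_cols k U = 1\<^sub>m k"
  proof (rule eq_matI)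
    fix i j assume "i < dim_row (1\<^sub>m k)" "j < dim_col (1\<^sub>m k)"
    then have ij: "i < k" "j < k" by auto
    have "(transpose_mat (first_cols k U) * first_cols k U) $$ (i,j) = col U i \<bullet> col U j"
      using c ij colc by simp
    also have "\<dots> = (transpose_mat U * U) $$ (i,j)" using U(1) ij km by simp
    also have "\<dots> = 1\<^sub>m k $$ (i,j)" using U(2) ij km by simp
    finally show "(transpose_mat (first_cols k U) * first_cols k U) $$ (i,j) = 1\<^sub>m k $$ (i,j)" .
  qed (use c in auto)
  show "(transpose_mat (first_cols k U) *\<^sub>v w) $ r = (transpose_mat U *\<^sub>v w) $ r"
    if "w \<in> carrier_vec m" "r < k" for w r
    using that c U km colc by simp
  show "(first_cols k U *\<^sub>v t) $ i = (\<Sum>r\<in>{0..<k}. U $$ (i,r) * t $ r)"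
    if "t \<in> carrier_vec k" "i < m" for t i
    using that c U km unfolding first_cols_def by (simp add: scalar_prod_def)
qed



lemma L2b:
  fixes A U S V Q B :: "real mat"
  assumes nm: "n \<le> m" and A: "A \<in> carrier_mat m n"
    and U: "U \<in> carrier_mat m m" "transpose_mat U * U = 1\<^sub>m m"
    and V: "V \<in> carrier_mat n n" "transpose_mat V * V = 1\<^sub>m n"
    and S: "S \<in> carrier_mat m n" "\<And>i j. i < m \<Longrightarrow> j < n \<Longrightarrow> i \<noteq> j \<Longrightarrow> S $$ (i,j) = 0"
           "\<And>i. i < n \<Longrightarrow> S $$ (i,i) \<ge> 0"
           "\<And>i j. i \<le> j \<Longrightarrow> j < n \<Longrightarrow> S $$ (j,j) \<le> S $$ (i,i)"
    and svd: "A = U * S * transpose_mat V"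
    and Q: "Q \<in> carrier_mat m b" "transpose_mat Q * Q = 1\<^sub>m b"
    and Bdef: "B = (1\<^sub>m m - Q * transpose_mat Q) * A"
    and eps: "\<epsilon> = norm2 ((1\<^sub>m m - first_cols k U * transpose_mat (first_cols k U)) * (Q * transpose_mat Q))"
    and e0: "\<epsilon> \<ge> 0"
    and ki: "k + i \<le> n" "1 \<le> i"
    and x: "x \<in> carrier_vec n" and z: "z \<in> carrier_vec b"
    and hV: "\<forall>r. k \<le> r \<longrightarrow> r < k + i - 1 \<longrightarrow> (transpose_mat V *\<^sub>v x) $ r = 0"
    and hU: "\<forall>r<k. (transpose_mat U *\<^sub>v (A *\<^sub>v x)) $ r = (transpose_mat U *\<^sub>v (Q *\<^sub>v z)) $ r"
  shows "vnorm (B *\<^sub>v x) \<le> (S $$ (k+i-1, k+i-1) + \<epsilon> * norm2 A) * vnorm x"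
proof -
  define Uk where "Uk = first_cols k U"
  have km: "k \<le> m" using ki nm by simp
  note UkF = first_cols_facts[OF U km, folded Uk_def]
  define P where "P = 1\<^sub>m m - Q * transpose_mat Q"
  have P: "P \<in> carrier_mat m m" unfolding P_def using Q by auto
  define a where "a = transpose_mat V *\<^sub>v x"
  have a: "a \<in> carrier_vec n" unfolding a_def using V x by auto
  define s where "s = S *\<^sub>v a"
  have s: "s \<in> carrier_vec m" unfolding s_def using S a by auto
  have Ax: "A *\<^sub>v x = U *\<^sub>v s" unfolding s_def a_def by (rule svd_apply[OF A U(1) V(1) S(1) svd x])
  have sU: "s = transpose_mat U *\<^sub>v (A *\<^sub>v x)" unfolding Ax using orth_back'[OF U s] by simp
  define s1 where "s1 = vec m (\<lambda>r. if r < k then s $ r else 0)"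
  define s2 where "s2 = vec m (\<lambda>r. if r < k then 0 else s $ r)"
  have s1: "s1 \<in> carrier_vec m" and s2: "s2 \<in> carrier_vec m" unfolding s1_def s2_def by auto
  have ss: "s = s1 + s2" unfolding s1_def s2_def using s by (intro eq_vecI) auto
  have Bx: "B *\<^sub>v x = P *\<^sub>v (U *\<^sub>v s1) + P *\<^sub>v (U *\<^sub>v s2)"
  proof -
    have "B *\<^sub>v x = P *\<^sub>v (A *\<^sub>v x)" unfolding Bdef P_def[symmetric] using P A x by simp
    also have "\<dots> = P *\<^sub>v (U *\<^sub>v s1 + U *\<^sub>v s2)" unfolding Ax ss using U s1 s2 by (simp add: mult_add_distrib_mat_vec)
    also have "\<dots> = P *\<^sub>v (U *\<^sub>v s1) + P *\<^sub>v (U *\<^sub>v s2)" using P U s1 s2 by (simp add: mult_add_distrib_mat_vec)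
    finally show ?thesis .
  qed
  define \<sigma> where "\<sigma> = S $$ (k+i-1, k+i-1)"
  have sig0: "\<sigma> \<ge> 0" unfolding \<sigma>_def using S(3) ki by simp
  have aa: "a \<bullet> a = x \<bullet> x" unfolding a_def
  proof -
    have "V *\<^sub>v (transpose_mat V *\<^sub>v x) = x" by (rule orth_back[OF V x])
    then show "(transpose_mat V *\<^sub>v x) \<bullet> (transpose_mat V *\<^sub>v x) = x \<bullet> x"
      using orth_sprod[OF V, of "transpose_mat V *\<^sub>v x"] V x by simp
  qed
  have n2: "vnorm (P *\<^sub>v (U *\<^sub>v s2)) \<le> \<sigma> * vnorm x"
  proof -
    have Us2: "U *\<^sub>v s2 \<in> carrier_vec m" using U s2 by auto
    have "vnorm (P *\<^sub>v (U *\<^sub>v s2)) \<le> vnorm (U *\<^sub>v s2)" unfolding P_def by (rule proj_norm_le[OF Q Us2])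
    also have "\<dots> = vnorm s2" by (rule orth_vnorm[OF U s2])
    also have "\<dots> \<le> \<sigma> * vnorm x"
    proof -
      have "s2 \<bullet> s2 = (\<Sum>r<m. (s2 $ r)^2)" by (rule sprod_sum[OF s2])
      also have "\<dots> = (\<Sum>r<n. (if r < k then 0 else (S $$ (r,r) * a $ r)^2))"
      proof -
        have "(\<Sum>r<m. (s2 $ r)^2) = (\<Sum>r<m. if r < n then (if r < k then 0 else (S $$ (r,r) * a $ r)^2) else 0)"
          by (intro sum.cong refl) (auto simp: s2_def s_def S_apply[OF S(1,2) a])
        also have "\<dots> = (\<Sum>r<n. (if r < k then 0 else (S $$ (r,r) * a $ r)^2))"
        proof -
          have "(\<Sum>r<m. if r < n then (if r < k then 0 else (S $$ (r,r) * a $ r)^2) else 0)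
             = (\<Sum>r<n. if r < n then (if r < k then 0 else (S $$ (r,r) * a $ r)^2) else 0)"
            by (rule sum.mono_neutral_right) (use nm in auto)
          then show ?thesis by simp
        qed
        finally show ?thesis .
      qed
      also have "\<dots> \<le> (\<Sum>r<n. \<sigma>^2 * (a $ r)^2)"
      proof (rule sum_mono)
        fix r assume r: "r \<in> {..<n}"
        show "(if r < k then 0 else (S $$ (r,r) * a $ r)^2) \<le> \<sigma>^2 * (a $ r)^2"
        proof (cases "r < k")
          case True then show ?thesis by simp
        next
          case False
          show ?thesis
          proof (cases "r < k + i - 1")
            case True
            then have "a $ r = 0" using hV False unfolding a_def by auto
            then show ?thesis using False by simp
          next
            case False2: False
            have "S $$ (r,r) \<le> \<sigma>" unfolding \<sigma>_def using S(4)[of "k+i-1" r] False2 r by auto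
            then have "(S $$ (r,r))^2 \<le> \<sigma>^2" using S(3)[of r] r by (intro power_mono) auto
            then show ?thesis using False by (simp add: power_mult_distrib mult_right_mono)
          qed
        qed
      qed
      also have "\<dots> = \<sigma>^2 * (a \<bullet> a)" using sprod_sum[OF a] by (simp add: sum_distrib_left)
      finally have "(vnorm s2)^2 \<le> (\<sigma> * vnorm x)^2"
        unfolding vnorm_sq power_mult_distrib aa .
      then show ?thesis using sig0 vnorm_ge0 by (meson mult_nonneg_nonneg power2_le_imp_le)
    qed
    finally show ?thesis .
  qed
  have n1: "vnorm (P *\<^sub>v (U *\<^sub>v s1)) \<le> \<epsilon> * norm2 A * vnorm x"
  proof -
    have Qz: "Q *\<^sub>v z \<in> carrier_vec m" using Q z by auto
    have tk: "transpose_mat Uk *\<^sub>v (Q *\<^sub>v z) \<in> carrier_vec k" using UkF(1) Qz by auto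
    have Us1: "U *\<^sub>v s1 = Uk *\<^sub>v (transpose_mat Uk *\<^sub>v (Q *\<^sub>v z))"
    proof (rule eq_vecI)
      fix i' assume "i' < dim_vec (Uk *\<^sub>v (transpose_mat Uk *\<^sub>v (Q *\<^sub>v z)))"
      then have i': "i' < m" using UkF(1) by simp
      have "(U *\<^sub>v s1) $ i' = (\<Sum>r\<in>{0..<m}. U $$ (i',r) * s1 $ r)" using U i' s1 by (simp add: scalar_prod_def)
      also have "\<dots> = (\<Sum>r\<in>{0..<k}. U $$ (i',r) * s1 $ r)"
        by (rule sum.mono_neutral_right) (use km s1_def in auto)
      also have "\<dots> = (\<Sum>r\<in>{0..<k}. U $$ (i',r) * (transpose_mat Uk *\<^sub>v (Q *\<^sub>v z)) $ r)"
      proof (intro sum.cong refl)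
        fix r assume r: "r \<in> {0..<k}"
        then have "s1 $ r = s $ r" unfolding s1_def using km by auto
        also have "\<dots> = (transpose_mat U *\<^sub>v (Q *\<^sub>v z)) $ r" using hU r unfolding sU by auto
        also have "\<dots> = (transpose_mat Uk *\<^sub>v (Q *\<^sub>v z)) $ r" using UkF(3)[OF Qz, of r] r by simp
        finally show "U $$ (i',r) * s1 $ r = U $$ (i',r) * (transpose_mat Uk *\<^sub>v (Q *\<^sub>v z)) $ r" by simp
      qed
      also have "\<dots> = (Uk *\<^sub>v (transpose_mat Uk *\<^sub>v (Q *\<^sub>v z))) $ i'" using UkF(4)[OF tk i'] by simp
      finally show "(U *\<^sub>v s1) $ i' = (Uk *\<^sub>v (transpose_mat Uk *\<^sub>v (Q *\<^sub>v z))) $ i'" .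
    qed (use U UkF(1) in auto)
    have epsb: "vnorm (((1\<^sub>m m - Uk * transpose_mat Uk) * (Q * transpose_mat Q)) *\<^sub>v w) \<le> \<epsilon> * vnorm w"
      if "w \<in> carrier_vec m" for w
      unfolding eps Uk_def[symmetric] by (rule norm2_bound[OF _ that]) (use UkF(1) Q in auto)
    have "vnorm (P *\<^sub>v (U *\<^sub>v s1)) \<le> \<epsilon> * vnorm (U *\<^sub>v s1)"
      unfolding P_def Us1 by (rule principal_angle[OF Q UkF(1,2) z epsb e0])
    also have "vnorm (U *\<^sub>v s1) = vnorm s1" by (rule orth_vnorm[OF U s1])
    also have "vnorm s1 \<le> vnorm s"
    proof -
      have "s1 \<bullet> s1 \<le> s \<bullet> s" unfolding sprod_sum[OF s1] sprod_sum[OF s]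
        by (intro sum_mono) (auto simp: s1_def)
      then show ?thesis unfolding vnorm_def by simp
    qed
    also have "vnorm s = vnorm (A *\<^sub>v x)" unfolding Ax using orth_vnorm[OF U s] by simp
    also have "\<dots> \<le> norm2 A * vnorm x" by (rule norm2_bound[OF A x])
    finally show ?thesis using e0 by (simp add: mult_left_mono mult.assoc)
  qed
  have "vnorm (B *\<^sub>v x) \<le> vnorm (P *\<^sub>v (U *\<^sub>v s1)) + vnorm (P *\<^sub>v (U *\<^sub>v s2))"
    unfolding Bx by (rule vnorm_add[of _ m]) (use P U s1 s2 in auto)
  also have "\<dots> \<le> \<epsilon> * norm2 A * vnorm x + \<sigma> * vnorm x" using n1 n2 by simp
  finally show ?thesis unfolding \<sigma>_def by (simp add: algebra_simps)
qed




lemma L2: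
  fixes A U S V Q B W :: "real mat"
  assumes nm: "n \<le> m" and A: "A \<in> carrier_mat m n"
    and U: "U \<in> carrier_mat m m" "transpose_mat U * U = 1\<^sub>m m"
    and V: "V \<in> carrier_mat n n" "transpose_mat V * V = 1\<^sub>m n"
    and S: "S \<in> carrier_mat m n" "\<And>i j. i < m \<Longrightarrow> j < n \<Longrightarrow> i \<noteq> j \<Longrightarrow> S $$ (i,j) = 0"
           "\<And>i. i < n \<Longrightarrow> S $$ (i,i) \<ge> 0"
           "\<And>i j. i \<le> j \<Longrightarrow> j < n \<Longrightarrow> S $$ (j,j) \<le> S $$ (i,i)"
    and svd: "A = U * S * transpose_mat V"
    and Q: "Q \<in> carrier_mat m b" "transpose_mat Q * Q = 1\<^sub>m b"
    and Bdef: "B = (1\<^sub>m m - Q * transpose_mat Q) * A"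
    and W: "W \<in> carrier_mat n n" "transpose_mat W * W = 1\<^sub>m n"
    and dec: "transpose_mat B * B = W * diagm n d * transpose_mat W"
    and sorted: "\<forall>i j. i \<le> j \<longrightarrow> j < n \<longrightarrow> d j \<le> d i"
    and eps: "\<epsilon> = norm2 ((1\<^sub>m m - first_cols k U * transpose_mat (first_cols k U)) * (Q * transpose_mat Q))"
    and e0: "\<epsilon> \<ge> 0" and e1: "\<epsilon> < 1"
    and ki: "k + i \<le> n" "1 \<le> i" and bk: "b \<le> k"
  shows "sqrt (d (k - b + i - 1)) \<le> S $$ (k+i-1, k+i-1) + \<epsilon> * norm2 A"
proof -
  define j0 where "j0 = k - b + i - 1"
  have j0n: "j0 < n" unfolding j0_def using ki bk by auto
  have B: "B \<in> carrier_mat m n" unfolding Bdef using A Q by auto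
  define Uk where "Uk = first_cols k U"
  have km: "k \<le> m" using ki nm by simp
  note UkF = first_cols_facts[OF U km, folded Uk_def]
  define M3 where "M3 = transpose_mat V * W"
  define M4 where "M4 = transpose_mat U * A * W"
  define M5 where "M5 = transpose_mat U * Q"
  have M3: "M3 \<in> carrier_mat n n" unfolding M3_def using V W by auto
  have M4: "M4 \<in> carrier_mat m n" unfolding M4_def using U A W by auto
  have M5: "M5 \<in> carrier_mat m b" unfolding M5_def using U Q by auto
  have cnt: "(n - 1 - j0) + (i - 1) + k < n + b" unfolding j0_def using ki bk by auto
  have "\<exists>u \<in> carrier_vec (n + b). u \<noteq> 0\<^sub>v (n + b)
     \<and> (\<forall>r<n - 1 - j0. (unit_vec n (j0 + 1 + r) @\<^sub>v 0\<^sub>v b) \<bullet> u = 0)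
     \<and> (\<forall>r<i - 1. (row M3 (k + r) @\<^sub>v 0\<^sub>v b) \<bullet> u = 0)
     \<and> (\<forall>r<k. (row M4 r @\<^sub>v (- row M5 r)) \<bullet> u = 0)"
  proof (rule kernel3[OF cnt])
    fix r assume "r < n - 1 - j0"
    show "unit_vec n (j0 + 1 + r) @\<^sub>v 0\<^sub>v b \<in> carrier_vec (n + b)" by auto
  next
    fix r assume "r < i - 1"
    have "row M3 (k + r) \<in> carrier_vec n" using M3 by (simp add: carrier_vecI)
    then show "row M3 (k + r) @\<^sub>v 0\<^sub>v b \<in> carrier_vec (n + b)" by auto
  next
    fix r assume "r < k"
    have "row M4 r \<in> carrier_vec n" using M4 by (simp add: carrier_vecI)
    moreover have "- row M5 r \<in> carrier_vec b" using M5 by (simp add: carrier_vecI)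
    ultimately show "row M4 r @\<^sub>v - row M5 r \<in> carrier_vec (n + b)" by auto
  qed
  then obtain u where u: "u \<in> carrier_vec (n + b)" "u \<noteq> 0\<^sub>v (n + b)"
     "\<forall>r<n - 1 - j0. (unit_vec n (j0 + 1 + r) @\<^sub>v 0\<^sub>v b) \<bullet> u = 0"
     "\<forall>r<i - 1. (row M3 (k + r) @\<^sub>v 0\<^sub>v b) \<bullet> u = 0"
     "\<forall>r<k. (row M4 r @\<^sub>v (- row M5 r)) \<bullet> u = 0" by blast
  define y where "y = vec_first u n"
  define z where "z = vec_last u b"
  have y: "y \<in> carrier_vec n" and z: "z \<in> carrier_vec b" unfolding y_def z_def by auto
  have yz0: "\<forall>r<n. j0 < r \<longrightarrow> y $ r = 0"
  proof (intro allI impI)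
    fix r assume r: "r < n" "j0 < r"
    have "r - (j0 + 1) < n - 1 - j0" using r by auto
    then have "(unit_vec n (j0 + 1 + (r - (j0 + 1))) @\<^sub>v 0\<^sub>v b) \<bullet> u = 0" using u(3) by blast
    moreover have "j0 + 1 + (r - (j0 + 1)) = r" using r by auto
    ultimately have "(unit_vec n r @\<^sub>v 0\<^sub>v b) \<bullet> u = 0" by simp
    then have "unit_vec n r \<bullet> y = 0" using append_sprod[of "unit_vec n r" n "0\<^sub>v b" b u] u(1) r z
      unfolding y_def[symmetric] z_def[symmetric] by simp
    then show "y $ r = 0" using y r by simp
  qed
  define x where "x = W *\<^sub>v y"
  have x: "x \<in> carrier_vec n" unfolding x_def using W y by auto
  have hV: "\<forall>r. k \<le> r \<longrightarrow> r < k + i - 1 \<longrightarrow> (transpose_mat V *\<^sub>v x) $ r = 0"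
  proof (intro allI impI)
    fix r assume r: "k \<le> r" "r < k + i - 1"
    have "r - k < i - 1" using r by auto
    then have "(row M3 (k + (r - k)) @\<^sub>v 0\<^sub>v b) \<bullet> u = 0" using u(4) by blast
    moreover have "row M3 r \<in> carrier_vec n" using M3 by (simp add: carrier_vecI)
    ultimately have "row M3 r \<bullet> y = 0" using append_sprod[of "row M3 r" n "0\<^sub>v b" b u] u(1) r z M3 ki
      unfolding y_def[symmetric] z_def[symmetric] by simp
    moreover have "transpose_mat V *\<^sub>v x = M3 *\<^sub>v y" unfolding x_def M3_def using V W y
      by (simp add: assoc_mult_mat_vec[of _ n n _ n])
    ultimately show "(transpose_mat V *\<^sub>v x) $ r = 0" using M3 r ki by simp
  qed
  have M4y: "transpose_mat U *\<^sub>v (A *\<^sub>v x) = M4 *\<^sub>v y" unfolding x_def M4_def using U A W y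
    by (simp add: assoc_mult_mat_vec[of _ m n _ n] assoc_mult_mat_vec[of _ m m _ n])
  have M5z: "transpose_mat U *\<^sub>v (Q *\<^sub>v z) = M5 *\<^sub>v z" unfolding M5_def using U Q z
    by (simp add: assoc_mult_mat_vec[of _ m m _ b])
  have hU: "\<forall>r<k. (transpose_mat U *\<^sub>v (A *\<^sub>v x)) $ r = (transpose_mat U *\<^sub>v (Q *\<^sub>v z)) $ r"
  proof (intro allI impI)
    fix r assume r: "r < k"
    have "(row M4 r @\<^sub>v (- row M5 r)) \<bullet> u = 0" using u(5) r by blast
    moreover have "row M4 r \<in> carrier_vec n" using M4 by (simp add: carrier_vecI)
    moreover have "- row M5 r \<in> carrier_vec b" using M5 by (simp add: carrier_vecI)
    ultimately have "row M4 r \<bullet> y + (- row M5 r) \<bullet> z = 0"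
      using append_sprod[of "row M4 r" n "- row M5 r" b u] u(1) r M4 M5 km
      unfolding y_def[symmetric] z_def[symmetric] by simp
    then have "row M4 r \<bullet> y = row M5 r \<bullet> z" using M5 z r km by simp
    then show "(transpose_mat U *\<^sub>v (A *\<^sub>v x)) $ r = (transpose_mat U *\<^sub>v (Q *\<^sub>v z)) $ r"
      unfolding M4y M5z using M4 M5 r km by simp
  qed
  have ynz: "y \<noteq> 0\<^sub>v n"
  proof
    assume y0: "y = 0\<^sub>v n"
    then have "x = 0\<^sub>v n" unfolding x_def using W by (intro eq_vecI) (auto simp: scalar_prod_def)
    then have Ax0: "A *\<^sub>v x = 0\<^sub>v m" using A by (intro eq_vecI) (auto simp: scalar_prod_def)
    have Qz: "Q *\<^sub>v z \<in> carrier_vec m" using Q z by auto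
    have t0: "transpose_mat Uk *\<^sub>v (Q *\<^sub>v z) = 0\<^sub>v k"
    proof (rule eq_vecI)
      fix r assume "r < dim_vec (0\<^sub>v k :: real vec)"
      then have r: "r < k" by simp
      have "(transpose_mat U *\<^sub>v (A *\<^sub>v x)) $ r = 0" unfolding Ax0 using U r km by (simp add: scalar_prod_def)
      then show "(transpose_mat Uk *\<^sub>v (Q *\<^sub>v z)) $ r = 0\<^sub>v k $ r" using hU r UkF(3)[OF Qz r] by simp
    qed (use UkF(1) in auto)
    have "((1\<^sub>m m - Uk * transpose_mat Uk) * (Q * transpose_mat Q)) *\<^sub>v (Q *\<^sub>v z) = Q *\<^sub>v z"
    proof -
      have cP: "1\<^sub>m m - Uk * transpose_mat Uk \<in> carrier_mat m m" using UkF(1) by auto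
      have cQ: "Q * transpose_mat Q \<in> carrier_mat m m" using Q by auto
      have "(Q * transpose_mat Q) *\<^sub>v (Q *\<^sub>v z) = Q *\<^sub>v (transpose_mat Q *\<^sub>v (Q *\<^sub>v z))"
        using Q z by (simp add: assoc_mult_mat_vec[of _ m b _ m])
      also have "transpose_mat Q *\<^sub>v (Q *\<^sub>v z) = z" by (rule orth_back'[OF Q z])
      finally have "(Q * transpose_mat Q) *\<^sub>v (Q *\<^sub>v z) = Q *\<^sub>v z" .
      then have "((1\<^sub>m m - Uk * transpose_mat Uk) * (Q * transpose_mat Q)) *\<^sub>v (Q *\<^sub>v z)
          = (1\<^sub>m m - Uk * transpose_mat Uk) *\<^sub>v (Q *\<^sub>v z)" using assoc_mult_mat_vec[OF cP cQ Qz] by simp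
      also have "\<dots> = Q *\<^sub>v z - Uk *\<^sub>v 0\<^sub>v k" using proj_apply[OF UkF(1) Qz] t0 by simp
      also have "\<dots> = Q *\<^sub>v z"
      proof -
        have "Uk *\<^sub>v 0\<^sub>v k = 0\<^sub>v m" using UkF(1) by (intro eq_vecI) (auto simp: scalar_prod_def)
        then show ?thesis using Qz by (intro eq_vecI) auto
      qed
      finally show ?thesis .
    qed
    moreover have "(1\<^sub>m m - Uk * transpose_mat Uk) * (Q * transpose_mat Q) \<in> carrier_mat m m"
      using UkF(1) Q by auto
    ultimately have "vnorm (Q *\<^sub>v z) \<le> \<epsilon> * vnorm (Q *\<^sub>v z)"
      using norm2_bound[of "(1\<^sub>m m - Uk * transpose_mat Uk) * (Q * transpose_mat Q)" m m "Q *\<^sub>v z"] Qz UkF(1) Q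
      unfolding eps Uk_def[symmetric] by auto
    then have h: "(1 - \<epsilon>) * vnorm (Q *\<^sub>v z) \<le> 0" by (simp add: algebra_simps)
    have "1 - \<epsilon> > 0" using e1 by simp
    then have "vnorm (Q *\<^sub>v z) \<le> 0" using h by (simp add: mult_le_0_iff)
    then have "vnorm (Q *\<^sub>v z) = 0" using vnorm_ge0[of "Q *\<^sub>v z"] by simp
    then have "z \<bullet> z = 0" using orth_vnorm[OF Q z] vnorm_sq[of z] by simp
    then have "z = 0\<^sub>v b" using sprod_self_eq0[of z] z by auto
    then have "u = 0\<^sub>v (n + b)" using append_zero[OF u(1)] y0 unfolding y_def z_def by simp
    then show False using u(2) by simp
  qed
  have ypos: "y \<bullet> y > 0"
  proof -
    have "y \<bullet> y \<noteq> 0" using sprod_self_eq0[of y] y ynz by auto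
    then show ?thesis using sprod_self_ge0[of y] by simp
  qed
  have low: "d j0 * (y \<bullet> y) \<le> (B *\<^sub>v x) \<bullet> (B *\<^sub>v x)"
    unfolding x_def by (rule sv_lower[OF B W dec sorted y j0n yz0])
  have eq: "\<epsilon> = norm2 ((1\<^sub>m m - first_cols k U * transpose_mat (first_cols k U)) * (Q * transpose_mat Q))" by (rule eps)
  have up: "vnorm (B *\<^sub>v x) \<le> (S $$ (k+i-1, k+i-1) + \<epsilon> * norm2 A) * vnorm x"
    by (rule L2b[OF nm A U V S svd Q Bdef eq e0 ki x z hV hU])
  have vx: "vnorm x = vnorm y" unfolding x_def by (rule orth_vnorm[OF W y])
  define c where "c = S $$ (k+i-1, k+i-1) + \<epsilon> * norm2 A"
  have c0: "c \<ge> 0"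
  proof -
    have "S $$ (k+i-1, k+i-1) \<ge> 0" using S(3) ki by simp
    moreover have "norm2 A \<ge> 0" by (rule norm2_ge0[OF A]) (use ki in auto)
    ultimately show ?thesis unfolding c_def using e0 by simp
  qed
  show ?thesis
  proof (cases "d j0 \<le> 0")
    case True
    then have "sqrt (d j0) \<le> 0" by simp
    then show ?thesis using c0 unfolding c_def j0_def[symmetric] by linarith
  next
    case False
    have "(sqrt (d j0) * vnorm y)^2 = d j0 * (y \<bullet> y)" using False by (simp add: power_mult_distrib vnorm_sq)
    also have "\<dots> \<le> (vnorm (B *\<^sub>v x))^2" using low by (simp add: vnorm_sq)
    also have "\<dots> \<le> (c * vnorm y)^2" using up vx vnorm_ge0 unfolding c_def by (intro power_mono) auto
    finally have "sqrt (d j0) * vnorm y \<le> c * vnorm y"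
      using c0 vnorm_ge0 by (meson mult_nonneg_nonneg power2_le_imp_le)
    moreover have "vnorm y > 0" using ypos unfolding vnorm_def by simp
    ultimately show ?thesis unfolding c_def j0_def by simp
  qed
qed




lemma kernel2:
  fixes f1 f2 :: "nat \<Rightarrow> real vec"
  assumes pN: "p1 + p2 < N"
    and f1: "\<And>r. r < p1 \<Longrightarrow> f1 r \<in> carrier_vec N"
    and f2: "\<And>r. r < p2 \<Longrightarrow> f2 r \<in> carrier_vec N"
  shows "\<exists>u \<in> carrier_vec N. u \<noteq> 0\<^sub>v N \<and> (\<forall>r<p1. f1 r \<bullet> u = 0) \<and> (\<forall>r<p2. f2 r \<bullet> u = 0)"
proof -
  have "p1 + p2 + 0 < N" using pN by simp
  from kernel3[OF this f1 f2, where ?f3.0="\<lambda>_. 0\<^sub>v N"] show ?thesis by auto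
qed

lemma L3:
  fixes A Q B W W0 :: "real mat"
  assumes A: "A \<in> carrier_mat m n"
    and Q: "Q \<in> carrier_mat m b" "transpose_mat Q * Q = 1\<^sub>m b"
    and Bdef: "B = (1\<^sub>m m - Q * transpose_mat Q) * A"
    and W: "W \<in> carrier_mat n n" "transpose_mat W * W = 1\<^sub>m n"
    and dec: "transpose_mat B * B = W * diagm n d * transpose_mat W"
    and sorted: "\<forall>i j. i \<le> j \<longrightarrow> j < n \<longrightarrow> d j \<le> d i"
    and W0: "W0 \<in> carrier_mat n b" "Q = A * W0"
    and b1: "1 \<le> b" and bn: "b \<le> n"
  shows "d (n - b) \<le> 0"
proof -
  define j0 where "j0 = n - b"
  have j0n: "j0 < n" unfolding j0_def using b1 bn by simp
  have B: "B \<in> carrier_mat m n" unfolding Bdef using A Q by auto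
  have cnt: "(b - 1) + n < n + b" using b1 by simp
  have "\<exists>u \<in> carrier_vec (n + b). u \<noteq> 0\<^sub>v (n + b)
     \<and> (\<forall>r<b - 1. (unit_vec n (j0 + 1 + r) @\<^sub>v 0\<^sub>v b) \<bullet> u = 0)
     \<and> (\<forall>r<n. (row W r @\<^sub>v (- row W0 r)) \<bullet> u = 0)"
  proof (rule kernel2[OF cnt])
    fix r assume "r < b - 1"
    show "unit_vec n (j0 + 1 + r) @\<^sub>v 0\<^sub>v b \<in> carrier_vec (n + b)" by auto
  next
    fix r assume "r < n"
    have "row W r \<in> carrier_vec n" using W by (simp add: carrier_vecI)
    moreover have "- row W0 r \<in> carrier_vec b" using W0 by (simp add: carrier_vecI)
    ultimately show "row W r @\<^sub>v - row W0 r \<in> carrier_vec (n + b)" by auto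
  qed
  then obtain u where u: "u \<in> carrier_vec (n + b)" "u \<noteq> 0\<^sub>v (n + b)"
     "\<forall>r<b - 1. (unit_vec n (j0 + 1 + r) @\<^sub>v 0\<^sub>v b) \<bullet> u = 0"
     "\<forall>r<n. (row W r @\<^sub>v (- row W0 r)) \<bullet> u = 0" by blast
  define y where "y = vec_first u n"
  define z where "z = vec_last u b"
  have y: "y \<in> carrier_vec n" and z: "z \<in> carrier_vec b" unfolding y_def z_def by auto
  have yz0: "\<forall>r<n. j0 < r \<longrightarrow> y $ r = 0"
  proof (intro allI impI)
    fix r assume r: "r < n" "j0 < r"
    have "r - (j0 + 1) < b - 1" using r unfolding j0_def by auto
    then have "(unit_vec n (j0 + 1 + (r - (j0 + 1))) @\<^sub>v 0\<^sub>v b) \<bullet> u = 0" using u(3) by blast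
    moreover have "j0 + 1 + (r - (j0 + 1)) = r" using r by auto
    ultimately have "(unit_vec n r @\<^sub>v 0\<^sub>v b) \<bullet> u = 0" by simp
    then have "unit_vec n r \<bullet> y = 0" using append_sprod[of "unit_vec n r" n "0\<^sub>v b" b u] u(1) r z
      unfolding y_def[symmetric] z_def[symmetric] by simp
    then show "y $ r = 0" using y r by simp
  qed
  define x where "x = W *\<^sub>v y"
  have x: "x \<in> carrier_vec n" unfolding x_def using W y by auto
  have xW0: "x = W0 *\<^sub>v z"
  proof (rule eq_vecI)
    fix r assume "r < dim_vec (W0 *\<^sub>v z)"
    then have r: "r < n" using W0 by simp
    have "(row W r @\<^sub>v (- row W0 r)) \<bullet> u = 0" using u(4) r by blast
    moreover have "row W r \<in> carrier_vec n" using W by (simp add: carrier_vecI)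
    moreover have "- row W0 r \<in> carrier_vec b" using W0 by (simp add: carrier_vecI)
    ultimately have "row W r \<bullet> y + (- row W0 r) \<bullet> z = 0"
      using append_sprod[of "row W r" n "- row W0 r" b u] u(1)
      unfolding y_def[symmetric] z_def[symmetric] by simp
    then have "row W r \<bullet> y = row W0 r \<bullet> z" using W0 z by simp
    then show "x $ r = (W0 *\<^sub>v z) $ r" unfolding x_def using W W0 r by simp
  qed (use W W0 x in auto)
  have Qz: "Q *\<^sub>v z = A *\<^sub>v x" unfolding xW0 W0(2) using A W0 z by simp
  have ynz: "y \<noteq> 0\<^sub>v n"
  proof
    assume y0: "y = 0\<^sub>v n"
    then have "x = 0\<^sub>v n" unfolding x_def using W by (intro eq_vecI) (auto simp: scalar_prod_def)
    then have "Q *\<^sub>v z = 0\<^sub>v m" unfolding Qz using A by (intro eq_vecI) (auto simp: scalar_prod_def)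
    then have "z \<bullet> z = 0" using orth_sprod[OF Q z] by simp
    then have "z = 0\<^sub>v b" using sprod_self_eq0[of z] z by auto
    then have "u = 0\<^sub>v (n + b)" using append_zero[OF u(1)] y0 unfolding y_def z_def by simp
    then show False using u(2) by simp
  qed
  have ypos: "y \<bullet> y > 0"
  proof -
    have "y \<bullet> y \<noteq> 0" using sprod_self_eq0[of y] y ynz by auto
    then show ?thesis using sprod_self_ge0[of y] by simp
  qed
  have Bx: "B *\<^sub>v x = 0\<^sub>v m"
  proof -
    have Qzc: "Q *\<^sub>v z \<in> carrier_vec m" using Q z by auto
    have "B *\<^sub>v x = (1\<^sub>m m - Q * transpose_mat Q) *\<^sub>v (A *\<^sub>v x)"
      unfolding Bdef using A Q x by (subst assoc_mult_mat_vec[of _ m m _ n]) auto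
    also have "\<dots> = Q *\<^sub>v z - Q *\<^sub>v (transpose_mat Q *\<^sub>v (Q *\<^sub>v z))"
      unfolding Qz[symmetric] by (rule proj_apply[OF Q(1) Qzc])
    also have "transpose_mat Q *\<^sub>v (Q *\<^sub>v z) = z" by (rule orth_back'[OF Q z])
    finally show ?thesis using Qzc by (intro eq_vecI) auto
  qed
  have "d j0 * (y \<bullet> y) \<le> (B *\<^sub>v x) \<bullet> (B *\<^sub>v x)"
    unfolding x_def by (rule sv_lower[OF B W dec sorted y j0n yz0])
  also have "\<dots> = 0" unfolding Bx by (simp add: scalar_prod_def)
  finally have "d j0 * (y \<bullet> y) \<le> 0" .
  then show ?thesis using ypos unfolding j0_def by (simp add: mult_le_0_iff)
qed

lemma pow_AAT:
  fixes A :: "real mat"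
  assumes A: "A \<in> carrier_mat m n"
  shows "(A * transpose_mat A) ^\<^sub>m q * A = A * (transpose_mat A * A) ^\<^sub>m q"
proof (induction q)
  case 0
  then show ?case using A by simp
next
  case (Suc q)
  have AAT: "A * transpose_mat A \<in> carrier_mat m m" using A by auto
  have ATA: "transpose_mat A * A \<in> carrier_mat n n" using A by auto
  have P1: "(A * transpose_mat A) ^\<^sub>m q \<in> carrier_mat m m" using AAT by simp
  have P2: "(transpose_mat A * A) ^\<^sub>m q \<in> carrier_mat n n" using ATA by simp
  have "(A * transpose_mat A) ^\<^sub>m Suc q * A = (A * transpose_mat A) ^\<^sub>m q * (A * transpose_mat A) * A" by simp
  also have "\<dots> = (A * transpose_mat A) ^\<^sub>m q * ((A * transpose_mat A) * A)"
    by (rule assoc_mult_mat[OF P1 AAT A])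
  also have "(A * transpose_mat A) * A = A * (transpose_mat A * A)"
    by (rule assoc_mult_mat[OF A _ A]) (use A in auto)
  also have "(A * transpose_mat A) ^\<^sub>m q * (A * (transpose_mat A * A)) = ((A * transpose_mat A) ^\<^sub>m q * A) * (transpose_mat A * A)"
    by (rule assoc_mult_mat[OF P1 A ATA, symmetric])
  also have "\<dots> = A * (transpose_mat A * A) ^\<^sub>m q * (transpose_mat A * A)" unfolding Suc ..
  also have "\<dots> = A * ((transpose_mat A * A) ^\<^sub>m q * (transpose_mat A * A))"
    by (rule assoc_mult_mat[OF A P2 ATA])
  also have "\<dots> = A * (transpose_mat A * A) ^\<^sub>m Suc q" by simp
  finally show ?case .
qed

lemma colspace_W0:
  fixes A Qh \<Omega> :: "real mat"
  assumes A: "A \<in> carrier_mat m n" and Om: "\<Omega> \<in> carrier_mat n b" and Qh: "Qh \<in> carrier_mat m b"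
    and cs: "colspace Qh = colspace ((A * transpose_mat A) ^\<^sub>m q * A * \<Omega>)"
  shows "\<exists>W1. W1 \<in> carrier_mat n b \<and> Qh = A * W1"
proof -
  define Y where "Y = (transpose_mat A * A) ^\<^sub>m q * \<Omega>"
  have Y: "Y \<in> carrier_mat n b" unfolding Y_def using A Om by auto
  have P2: "(transpose_mat A * A) ^\<^sub>m q \<in> carrier_mat n n" using A by auto
  have X: "(A * transpose_mat A) ^\<^sub>m q * A * \<Omega> = A * Y"
    unfolding pow_AAT[OF A] Y_def by (rule assoc_mult_mat[OF A P2 Om])
  have ex: "\<exists>t. t \<in> carrier_vec b \<and> col Qh l = A *\<^sub>v (Y *\<^sub>v t)" if l: "l < b" for l
  proof -
    have "col Qh l = Qh *\<^sub>v unit_vec b l" using Qh l by (intro eq_vecI) auto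
    then have "col Qh l \<in> colspace Qh" unfolding colspace_def using Qh by auto
    then have "col Qh l \<in> colspace (A * Y)" using cs X by simp
    then obtain t where t: "t \<in> carrier_vec b" "col Qh l = (A * Y) *\<^sub>v t"
      unfolding colspace_def using A Y by auto
    then show ?thesis using A Y by (intro exI[of _ t]) (simp add: assoc_mult_mat_vec[of _ m n _ b])
  qed
  define T where "T = (\<lambda>l. SOME t. t \<in> carrier_vec b \<and> col Qh l = A *\<^sub>v (Y *\<^sub>v t))"
  have T: "T l \<in> carrier_vec b \<and> col Qh l = A *\<^sub>v (Y *\<^sub>v T l)" if "l < b" for l
    unfolding T_def using someI_ex[OF ex[OF that]] .
  define W1 where "W1 = mat n b (\<lambda>(i,l). (Y *\<^sub>v T l) $ i)"
  have W1: "W1 \<in> carrier_mat n b" unfolding W1_def by auto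
  have colW1: "col W1 l = Y *\<^sub>v T l" if "l < b" for l
    unfolding W1_def using that Y by (intro eq_vecI) auto
  have "Qh = A * W1"
  proof (rule eq_matI)
    fix i l assume "i < dim_row (A * W1)" "l < dim_col (A * W1)"
    then have i: "i < m" and l: "l < b" using A W1 by auto
    have "(A * W1) $$ (i,l) = row A i \<bullet> (Y *\<^sub>v T l)" using A W1 i l colW1 by simp
    also have "\<dots> = (A *\<^sub>v (Y *\<^sub>v T l)) $ i" using A i by simp
    also have "\<dots> = col Qh l $ i" using T[OF l] by simp
    also have "\<dots> = Qh $$ (i,l)" using Qh i l by simp
    finally show "Qh $$ (i,l) = (A * W1) $$ (i,l)" by simp
  qed (use A W1 Qh in auto)
  then show ?thesis using W1 by blast
qed




lemma count_filter:
  fixes f :: "nat \<Rightarrow> real"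
  assumes rn: "r \<le> n" and hi: "\<And>j. j < r \<Longrightarrow> \<theta> < f j"
    and lo: "\<And>j. r \<le> j \<Longrightarrow> j < n \<Longrightarrow> \<not> \<theta> < f j"
  shows "length (filter (\<lambda>s. s > \<theta>) (map f [0..<n])) = r"
proof -
  have "[0..<n] = [0..<r] @ [r..<n]" using upt_add_eq_append[of 0 r "n - r"] rn by simp
  then have "filter (\<lambda>s. s > \<theta>) (map f [0..<n]) = filter (\<lambda>s. s > \<theta>) (map f [0..<r]) @ filter (\<lambda>s. s > \<theta>) (map f [r..<n])"
    by simp
  moreover have "filter (\<lambda>s. s > \<theta>) (map f [0..<r]) = map f [0..<r]" using hi by (intro filter_True) auto
  moreover have "filter (\<lambda>s. s > \<theta>) (map f [r..<n]) = []" using lo by (intro filter_False) auto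
  ultimately show ?thesis by simp
qed

theorem theorem3p4:
  fixes A U S V \<Omega> Qh Uh :: "real mat"
    and m n k b q :: nat and \<theta> :: real
  assumes dims: "n \<le> m" "A \<in> carrier_mat m n"
    (* full SVD  A = U S V^T *)
    and U: "U \<in> carrier_mat m m" "transpose_mat U * U = 1\<^sub>m m"
    and V: "V \<in> carrier_mat n n" "transpose_mat V * V = 1\<^sub>m n"
    and S: "S \<in> carrier_mat m n" "\<And>i j. i < m \<Longrightarrow> j < n \<Longrightarrow> i \<noteq> j \<Longrightarrow> S $$ (i,j) = 0"
           "\<And>i. i < n \<Longrightarrow> S $$ (i,i) \<ge> 0"
           "\<And>i j. i \<le> j \<Longrightarrow> j < n \<Longrightarrow> S $$ (j,j) \<le> S $$ (i,i)"
    and svd: "A = U * S * transpose_mat V"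
    (* sigma_1 >= ... >= sigma_k > theta > sigma_{k+1} >= ... >= sigma_n, sigma_i = S(i-1,i-1) *)
    and theta: "\<theta> > 0" "k \<le> n"
           "\<And>i. 1 \<le> i \<Longrightarrow> i \<le> k \<Longrightarrow> S $$ (i-1,i-1) > \<theta>"
           "\<And>i. k < i \<Longrightarrow> i \<le> n \<Longrightarrow> S $$ (i-1,i-1) < \<theta>"
    and bk: "b \<le> k"
    and Omega: "\<Omega> \<in> carrier_mat n b"
    and Qh: "Qh \<in> carrier_mat m b" "transpose_mat Qh * Qh = 1\<^sub>m b"
            "colspace Qh = colspace ((A * transpose_mat A) ^\<^sub>m q * A * \<Omega>)"
    and Uh: "Uh \<in> carrier_mat b b" "transpose_mat Uh * Uh = 1\<^sub>m b"
            "\<exists>lam::nat \<Rightarrow> real.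
               (\<forall>i j. i \<le> j \<longrightarrow> j < b \<longrightarrow> lam j \<le> lam i) \<and>
               (\<forall>j < b. (transpose_mat Qh * A * transpose_mat A * Qh) *\<^sub>v col Uh j
                          = lam j \<cdot>\<^sub>v col Uh j)"
    and eps_lt: "subspace_dist (Qh * Uh) (first_cols k U) < 1"
    and gap_hi: "1 \<le> k \<Longrightarrow>
                 S $$ (k-1,k-1) - subspace_dist (Qh * Uh) (first_cols k U) * norm2 A > \<theta>"
    and gap_lo: "k < n \<Longrightarrow>
                 \<theta> > S $$ (k,k) + subspace_dist (Qh * Uh) (first_cols k U) * norm2 A"
  shows "(\<forall>i. 1 \<le> i \<longrightarrow> i \<le> n - k \<longrightarrow>
            \<bar>sval (k - b + i) ((1\<^sub>m m - (Qh * Uh) * transpose_mat (Qh * Uh)) * A)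
               - S $$ (k+i-1, k+i-1)\<bar>
            \<le> subspace_dist (Qh * Uh) (first_cols k U) * norm2 A)
       \<and> int (rank_theta \<theta> ((1\<^sub>m m - (Qh * Uh) * transpose_mat (Qh * Uh)) * A))
           = int (rank_theta \<theta> A) - int b"
proof -
  have nm: "n \<le> m" and A: "A \<in> carrier_mat m n" using dims by auto
  define Q where "Q = Qh * Uh"
  have Qc: "Q \<in> carrier_mat m b" unfolding Q_def using Qh Uh by auto
  have QTQ: "transpose_mat Q * Q = 1\<^sub>m b"
  proof -
    have tQ: "transpose_mat Q = transpose_mat Uh * transpose_mat Qh"
      unfolding Q_def using Qh Uh by (simp add: transpose_mult)
    have c1: "transpose_mat Uh \<in> carrier_mat b b" "transpose_mat Qh \<in> carrier_mat b m" using Qh Uh by auto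
    have "transpose_mat Q * Q = transpose_mat Uh * (transpose_mat Qh * (Qh * Uh))"
      unfolding tQ unfolding Q_def by (rule assoc_mult_mat[OF c1 _]) (use Qh Uh in auto)
    also have "transpose_mat Qh * (Qh * Uh) = (transpose_mat Qh * Qh) * Uh"
      by (rule assoc_mult_mat[OF c1(2) Qh(1) Uh(1), symmetric])
    also have "\<dots> = Uh" using Qh Uh by simp
    finally show ?thesis using Uh by simp
  qed
  note Q = Qc QTQ
  define B where "B = (1\<^sub>m m - Q * transpose_mat Q) * A"
  have B: "B \<in> carrier_mat m n" unfolding B_def using A Q by auto
  define \<epsilon> where "\<epsilon> = subspace_dist Q (first_cols k U)"
  have eps: "\<epsilon> = norm2 ((1\<^sub>m m - first_cols k U * transpose_mat (first_cols k U)) * (Q * transpose_mat Q))"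
    unfolding \<epsilon>_def subspace_dist_def using Qc by simp
  have e1: "\<epsilon> < 1" using eps_lt unfolding \<epsilon>_def Q_def .
  have BTB: "transpose_mat B * B \<in> carrier_mat n n" using B by auto
  have BTBsym: "transpose_mat (transpose_mat B * B) = transpose_mat B * B"
    using B by (simp add: transpose_mult[of _ n m _ n])
  obtain W d where W: "W \<in> carrier_mat n n" "transpose_mat W * W = 1\<^sub>m n"
    and dec: "transpose_mat B * B = W * diagm n d * transpose_mat W"
    and sorted: "\<forall>i j. i \<le> j \<longrightarrow> j < n \<longrightarrow> d j \<le> d i"
    using spectral[OF BTB BTBsym] by blast
  have svB: "sing_vals B = map (\<lambda>j. sqrt (d j)) [0..<n]"
    by (rule sing_vals_decomp[OF B W dec sorted])
  have ATA: "transpose_mat A * A = V * diagm n (\<lambda>r. (S $$ (r,r))^2) * transpose_mat V"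
    by (rule svd_ata[OF nm A U V(1) S(1,2) svd])
  have sortedS: "\<forall>i j. i \<le> j \<longrightarrow> j < n \<longrightarrow> (S $$ (j,j))^2 \<le> (S $$ (i,i))^2"
    using S(3,4) by (auto intro: power_mono)
  have svA: "sing_vals A = map (\<lambda>j. S $$ (j,j)) [0..<n]"
  proof -
    have "sing_vals A = map (\<lambda>j. sqrt ((S $$ (j,j))^2)) [0..<n]"
      by (rule sing_vals_decomp[OF A V ATA sortedS])
    also have "\<dots> = map (\<lambda>j. S $$ (j,j)) [0..<n]" using S(3) by (intro map_cong refl) auto
    finally show ?thesis .
  qed
  have L1': "(S $$ (j0 + b, j0 + b))^2 \<le> d j0" if "j0 + b < n" for j0
    using S(2,3,4) by (intro L1[OF nm A U V S(1) _ _ _ svd Q B_def W dec sorted that]) auto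
  have L2': "sqrt (d (k - b + i - 1)) \<le> S $$ (k+i-1, k+i-1) + \<epsilon> * norm2 A"
    if "k + i \<le> n" "1 \<le> i" for i
  proof -
    have Ukc: "first_cols k U \<in> carrier_mat m k" using first_cols_facts(1)[OF U] theta(2) nm by auto
    have e0: "\<epsilon> \<ge> 0" unfolding eps by (rule norm2_ge0[of _ m m]) (use Q that nm Ukc in auto)
    show ?thesis using S(2,3,4) by (intro L2[OF nm A U V S(1) _ _ _ svd Q B_def W dec sorted eps e0 e1 that bk]) auto
  qed
  have part1: "\<forall>i. 1 \<le> i \<longrightarrow> i \<le> n - k \<longrightarrow>
      \<bar>sval (k - b + i) B - S $$ (k+i-1, k+i-1)\<bar> \<le> \<epsilon> * norm2 A"
  proof (intro allI impI)
    fix i assume i: "1 \<le> i" "i \<le> n - k"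
    have idx: "k - b + i - 1 < n" using i bk theta(2) by auto
    have sv: "sval (k - b + i) B = sqrt (d (k - b + i - 1))"
      unfolding sval_def svB using idx by simp
    have "k - b + i - 1 + b < n" using i bk theta(2) by auto
    from L1'[OF this] have h: "(S $$ (k - b + i - 1 + b, k - b + i - 1 + b))^2 \<le> d (k - b + i - 1)" .
    have e: "k - b + i - 1 + b = k + i - 1" using i bk by auto
    have "(S $$ (k + i - 1, k + i - 1))^2 \<le> d (k - b + i - 1)" using h unfolding e .
    then have lo: "S $$ (k + i - 1, k + i - 1) \<le> sqrt (d (k - b + i - 1))" by (rule real_le_rsqrt)
    have hi: "sqrt (d (k - b + i - 1)) \<le> S $$ (k+i-1, k+i-1) + \<epsilon> * norm2 A"
      by (rule L2') (use i theta(2) in auto)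
    show "\<bar>sval (k - b + i) B - S $$ (k+i-1, k+i-1)\<bar> \<le> \<epsilon> * norm2 A"
      unfolding sv using lo hi by simp
  qed
  have rankA: "rank_theta \<theta> A = k"
    unfolding rank_theta_def svA
  proof (rule count_filter[OF theta(2)])
    fix j assume "j < k" then show "\<theta> < S $$ (j,j)" using theta(3)[of "j+1"] by simp
  next
    fix j assume "k \<le> j" "j < n" then show "\<not> \<theta> < S $$ (j,j)" using theta(4)[of "j+1"] by simp
  qed
  have rankB: "rank_theta \<theta> B = k - b"
    unfolding rank_theta_def svB
  proof (rule count_filter)
    show "k - b \<le> n" using theta(2) by simp
  next
    fix j assume j: "j < k - b"
    have "k - b - 1 + b < n" using j theta(2) by auto
    from L1'[OF this] have h: "(S $$ (k - b - 1 + b, k - b - 1 + b))^2 \<le> d (k - b - 1)" .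
    have e: "k - b - 1 + b = k - 1" using j by auto
    have "(S $$ (k - 1, k - 1))^2 \<le> d (k - b - 1)" using h unfolding e .
    then have "S $$ (k - 1, k - 1) \<le> sqrt (d (k - b - 1))" by (rule real_le_rsqrt)
    moreover have "S $$ (k - 1, k - 1) > \<theta>" using theta(3)[of k] j by auto
    moreover have "d (k - b - 1) \<le> d j" using sorted j theta(2) by auto
    ultimately show "\<theta> < sqrt (d j)" using real_sqrt_le_mono[of "d (k - b - 1)" "d j"] by linarith
  next
    fix j assume j: "k - b \<le> j" "j < n"
    have dj: "d j \<le> d (k - b)" using sorted j by auto
    show "\<not> \<theta> < sqrt (d j)"
    proof (cases "k < n")
      case True
      have "sqrt (d (k - b + 1 - 1)) \<le> S $$ (k+1-1, k+1-1) + \<epsilon> * norm2 A"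
        by (rule L2') (use True in auto)
      then have "sqrt (d (k - b)) \<le> S $$ (k,k) + \<epsilon> * norm2 A" by simp
      moreover have "S $$ (k,k) + \<epsilon> * norm2 A < \<theta>"
        using gap_lo[OF True] unfolding \<epsilon>_def Q_def by simp
      ultimately show ?thesis using real_sqrt_le_mono[OF dj] by linarith
    next
      case False
      then have kn: "k = n" using theta(2) by simp
      then have b1: "1 \<le> b" using j by auto
      obtain W1 where W1: "W1 \<in> carrier_mat n b" "Qh = A * W1"
        using colspace_W0[OF A Omega Qh(1) Qh(3)] by blast
      have W0: "W1 * Uh \<in> carrier_mat n b" "Q = A * (W1 * Uh)"
        unfolding Q_def W1(2) using W1 Uh A by (auto intro: assoc_mult_mat[OF A W1(1) Uh(1)])
      have "d (n - b) \<le> 0" by (rule L3[OF A Q B_def W dec sorted W0 b1]) (use bk theta(2) in auto)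
      then have "d j \<le> 0" using dj kn by simp
      then have "sqrt (d j) \<le> 0" by simp
      then show ?thesis using theta(1) by linarith
    qed
  qed
  have "int (rank_theta \<theta> B) = int (rank_theta \<theta> A) - int b" using rankA rankB bk by (simp add: of_nat_diff)
  with part1 show ?thesis unfolding B_def Q_def \<epsilon>_def by blast
qed


end
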